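(* Consider an instance of the Weight Constrained Shortest Path Problem (directed graph $G=(S,E)$, edge costs $\mathit{cost}_1,\mathit{cost}_2\ge 0$, states $\mathit{start},\mathit{goal}\in S$, weight limit $W$) that admits at least one $\mathit{start}$-$\mathit{goal}$ path $\pi$ with $\mathit{cost}_2(\pi)\le W$. Then the algorithm WC-A* (described in the context) terminates, and the node $\mathit{Sol}$ it returns corresponds to a cost-optimal solution path, i.e. the path obtained by following parent pointers from $\mathit{Sol}$ back to $\mathit{start}$, followed by the path from $s(\mathit{Sol})$ to $\mathit{goal}$ realising $(h_1(s(\mathit{Sol})),ub_2(s(\mathit{Sol})))$, is a cost-optimal solution path.
   Context: A path is a sequence of states $u_1,\dots,u_n$ with $(u_i,u_{i+1})\in E$; $\mathit{cost}_p(\pi)=\sum_i \mathit{cost}_p(u_i,u_{i+1})$ for $p\in\{1,2\}$. A cost-optimal solution path is a $\mathit{start}$-$\mathit{goal}$ path $\pi^*$ with $\mathit{cost}_2(\pi^* )\le W$ whose pair $(\mathit{cost}_1,\mathit{cost}_2)$ is lexicographically smallest among all $\mathit{start}$-$\mathit{goal}$ paths with $\mathit{cost}_2\le W$. WC-A*, initialisation: set $\overline{f_2}=W$, $\overline{f_1}=\infty$. (i) Run a bounded A* search backward from $\mathit{goal}$ (on the reversed graph) on $\mathit{cost}_2$ with an admissible heuristic, breaking ties on $\mathit{cost}_1$; for every state $u$ it expands it records $h_2(u)$ = minimum $\mathit{cost}_2$ of a $u$-$\mathit{goal}$ path and $ub_1(u)$ = the $\mathit{cost}_1$ of a $u$-$\mathit{goal}$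 path that is lexicographically minimal in $(\mathit{cost}_2,\mathit{cost}_1)$; when $\mathit{start}$ is about to be expanded it sets $\overline{f_1}\leftarrow ub_1(\mathit{start})$; it stops before expanding a state whose $f_2$-estimate exceeds $\overline{f_2}$. (ii) Then run a bounded backward A* from $\mathit{goal}$ on $\mathit{cost}_1$ with an admissible heuristic, breaking ties on $\mathit{cost}_2$, using only states expanded in (i); for each state $u$ it expands it records $h_1(u)$ = minimum $\mathit{cost}_1$ of a $u$-$\mathit{goal}$ path and $ub_2(u)$ = the $\mathit{cost}_2$ of such a path lexicographically minimal in $(\mathit{cost}_1,\mathit{cost}_2)$; it stops before expanding a state with $f_1$-estimate exceeding $\overline{f_1}$. States not explored in these searches are ignored in what follows. WC-A*, constrained search: a node $x$ stores a state $s(x)$, $\mathbf g(x)=(g_1(x),g_2(x))$ (costs of the path from $\mathit{start}$ to $s(x)$ given by its parent pointers), $\mathbf f(x)=\mathbf g(x)+\mathbf h(s(x))$, and a parent. Initialise $g_{min}(u)=\infty$ for all $u$, $f^{sol}_2=\infty$, $\mathit{Sol}$ empty, and a priority queue $\mathit{Open}$ containing the node for $\mathit{start}$ with $\mathbf g=(0,0)$. While $\mathit{Open}\ne\emptyset$: remove from $\mathit{Open}$ a node $x$ with lexicographically smallest $(f_1,f_2)$; if $f_1(x)>\overline{f_1}$ stop; if $g_2(x)\ge g_{min}(s(x))$ discard $x$ and continue; set $g_{min}(s(x))\leftarrow g_2(x)$. (Early solution update) Let $u=s(x)$, $f_1'=g_1(x)+ub_1(u)$, $f_2'=g_2(x)+ub_2(u)$.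 If $f_2'\le\overline{f_2}$: if $f_1(x)<\overline{f_1}$ or $f_2'<f^{sol}_2$, set $\overline{f_1}\leftarrow f_1(x)$, $f^{sol}_2\leftarrow f_2'$, $\mathit{Sol}\leftarrow x$. Otherwise, if $f_1'<\overline{f_1}$, set $\overline{f_1}\leftarrow f_1'$ and $f^{sol}_2\leftarrow\infty$. If $h_1(u)=ub_1(u)$, continue without expanding. Otherwise, for every edge $(u,v)\in E$ create node $y$ with $s(y)=v$, $\mathbf g(y)=\mathbf g(x)+\mathbf{cost}(u,v)$, $\mathbf f(y)=\mathbf g(y)+\mathbf h(v)$, parent $x$; discard $y$ if $g_2(y)\ge g_{min}(v)$, or $f_1(y)>\overline{f_1}$, or $f_2(y)>\overline{f_2}$; otherwise insert $y$ into $\mathit{Open}$. When the loop ends, return $\mathit{Sol}$. *)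

theory Defs
  imports Main "HOL-Library.Extended_Real" "HOL-Library.Multiset" "HOL-Library.Product_Lexorder"
begin

fun pcost :: "('a \<Rightarrow> 'a \<Rightarrow> real) \<Rightarrow> 'a list \<Rightarrow> real" where
  "pcost c (a # b # r) = c a b + pcost c (b # r)"
| "pcost c _ = 0"

definition is_path :: "('a \<times> 'a) set \<Rightarrow> 'a \<Rightarrow> 'a \<Rightarrow> 'a list \<Rightarrow> bool" where
  "is_path E u v p \<longleftrightarrow> p \<noteq> [] \<and> hd p = u \<and> last p = v \<and> successively (\<lambda>a b. (a, b) \<in> E) p"

text \<open>Cost-optimal solution path (lexicographic order on pairs via Product_Lexorder).\<close>
definition cost_optimal ::
  "('a \<times> 'a) set \<Rightarrow> ('a \<Rightarrow> 'a \<Rightarrow> real) \<Rightarrow> ('a \<Rightarrow> 'a \<Rightarrow> real) \<Rightarrow> real \<Rightarrow> 'a \<Rightarrow> 'a \<Rightarrow> 'a list \<Rightarrow> bool" where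
  "cost_optimal E c1 c2 W start goal \<pi> \<longleftrightarrow>
     is_path E start goal \<pi> \<and> pcost c2 \<pi> \<le> W \<and>
     (\<forall>\<pi>'. is_path E start goal \<pi>' \<and> pcost c2 \<pi>' \<le> W \<longrightarrow>
        (pcost c1 \<pi>, pcost c2 \<pi>) \<le> (pcost c1 \<pi>', pcost c2 \<pi>'))"

text \<open>Admissible heuristic for a backward search from goal (it estimates the cost of reaching
  u from start): it never overestimates the cost of a start-u path.\<close>
definition admissible :: "('a \<times> 'a) set \<Rightarrow> ('a \<Rightarrow> 'a \<Rightarrow> real) \<Rightarrow> 'a \<Rightarrow> ('a \<Rightarrow> real) \<Rightarrow> bool" where
  "admissible E c start h \<longleftrightarrow> (\<forall>u p. is_path E start u p \<longrightarrow> h u \<le> pcost c p)"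

definition h2v :: "('a \<times> 'a) set \<Rightarrow> ('a \<Rightarrow> 'a \<Rightarrow> real) \<Rightarrow> 'a \<Rightarrow> 'a \<Rightarrow> real" where
  "h2v E c2 goal u = Inf {pcost c2 p | p. is_path E u goal p}"

definition ub1v :: "('a \<times> 'a) set \<Rightarrow> ('a \<Rightarrow> 'a \<Rightarrow> real) \<Rightarrow> ('a \<Rightarrow> 'a \<Rightarrow> real) \<Rightarrow> 'a \<Rightarrow> 'a \<Rightarrow> real" where
  "ub1v E c1 c2 goal u = Inf {pcost c1 p | p. is_path E u goal p \<and> pcost c2 p = h2v E c2 goal u}"

text \<open>Phase (ii) only uses the states X expanded in phase (i).\<close>
definition h1v :: "('a \<times> 'a) set \<Rightarrow> ('a \<Rightarrow> 'a \<Rightarrow> real) \<Rightarrow> 'a \<Rightarrow> 'a set \<Rightarrow> 'a \<Rightarrow> real" where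
  "h1v E c1 goal X u = Inf {pcost c1 p | p. is_path E u goal p \<and> set p \<subseteq> X}"

definition ub2v :: "('a \<times> 'a) set \<Rightarrow> ('a \<Rightarrow> 'a \<Rightarrow> real) \<Rightarrow> ('a \<Rightarrow> 'a \<Rightarrow> real) \<Rightarrow> 'a \<Rightarrow> 'a set \<Rightarrow> 'a \<Rightarrow> real" where
  "ub2v E c1 c2 goal X u = Inf {pcost c2 p | p. is_path E u goal p \<and> set p \<subseteq> X \<and> pcost c1 p = h1v E c1 goal X u}"

definition run_terminates :: "('s \<Rightarrow> 's \<Rightarrow> bool) \<Rightarrow> ('s \<Rightarrow> bool) \<Rightarrow> 's \<Rightarrow> bool" where
  "run_terminates R H s0 \<longleftrightarrow>
     \<not> (\<exists>f. f 0 = s0 \<and> (\<forall>n. R (f n) (f (Suc n)))) \<and>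
     (\<forall>s. R\<^sup>*\<^sup>* s0 s \<and> \<not> H s \<longrightarrow> (\<exists>t. R s t))"

text \<open>Nodes are (state, g_p, g_q): p the primary cost, q the tie-breaking cost.
  bs_best records, for every expanded state, the best (g_p,g_q) with which it was expanded.\<close>
record 'a bs =
  bs_open :: "('a \<times> real \<times> real) multiset"
  bs_best :: "'a \<Rightarrow> (real \<times> real) option"
  bs_halted :: bool

definition bkey :: "('a \<Rightarrow> real) \<Rightarrow> ('a \<times> real \<times> real) \<Rightarrow> real \<times> real" where
  "bkey h x = (case x of (v, gp, gq) \<Rightarrow> (gp + h v, gq))"

inductive bs_step for E :: "('a \<times> 'a) set" and p q :: "'a \<Rightarrow> 'a \<Rightarrow> real"
  and h :: "'a \<Rightarrow> real" and A :: "'a set" and B :: ereal where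
  empty: "\<not> bs_halted \<sigma> \<Longrightarrow> bs_open \<sigma> = {#} \<Longrightarrow> bs_step E p q h A B \<sigma> (\<sigma>\<lparr>bs_halted := True\<rparr>)"
| stop: "\<not> bs_halted \<sigma> \<Longrightarrow> x \<in># bs_open \<sigma> \<Longrightarrow> (\<forall>y\<in>#bs_open \<sigma>. bkey h x \<le> bkey h y) \<Longrightarrow>
    ereal (fst (bkey h x)) > B \<Longrightarrow> bs_step E p q h A B \<sigma> (\<sigma>\<lparr>bs_halted := True\<rparr>)"
| discard: "\<not> bs_halted \<sigma> \<Longrightarrow> x \<in># bs_open \<sigma> \<Longrightarrow> (\<forall>y\<in>#bs_open \<sigma>. bkey h x \<le> bkey h y) \<Longrightarrow>
    x = (v, gp, gq) \<Longrightarrow> ereal (gp + h v) \<le> B \<Longrightarrow> bs_best \<sigma> v = Some b \<Longrightarrow> b \<le> (gp, gq) \<Longrightarrow>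
    bs_step E p q h A B \<sigma> (\<sigma>\<lparr>bs_open := bs_open \<sigma> - {#x#}\<rparr>)"
| expand: "\<not> bs_halted \<sigma> \<Longrightarrow> x \<in># bs_open \<sigma> \<Longrightarrow> (\<forall>y\<in>#bs_open \<sigma>. bkey h x \<le> bkey h y) \<Longrightarrow>
    x = (v, gp, gq) \<Longrightarrow> ereal (gp + h v) \<le> B \<Longrightarrow>
    bs_best \<sigma> v = None \<or> (\<exists>b. bs_best \<sigma> v = Some b \<and> (gp, gq) < b) \<Longrightarrow>
    bs_step E p q h A B \<sigma>
      (\<sigma>\<lparr>bs_open := bs_open \<sigma> - {#x#} +
            mset_set {(w, gp + p w v, gq + q w v) | w. (w, v) \<in> E \<and> w \<in> A},
         bs_best := (bs_best \<sigma>)(v := Some (gp, gq))\<rparr>)"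

definition bs_init :: "'a \<Rightarrow> 'a set \<Rightarrow> 'a bs" where
  "bs_init goal A = \<lparr>bs_open = (if goal \<in> A then {#(goal, 0, 0)#} else {#}),
                     bs_best = (\<lambda>_. None), bs_halted = False\<rparr>"

definition bs_expanded :: "'a bs \<Rightarrow> 'a set" where
  "bs_expanded \<sigma> = {v. bs_best \<sigma> v \<noteq> None}"

text \<open>A node is the list of states of its parent-pointer path, from start to s(x) = last x;
  its g-values are the path costs.\<close>
record 'a ms =
  ms_open :: "'a list multiset"
  ms_gmin :: "'a \<Rightarrow> ereal"
  ms_f1bar :: ereal
  ms_f2sol :: ereal
  ms_sol :: "'a list option"
  ms_halted :: bool

definition mkey :: "('a \<Rightarrow> 'a \<Rightarrow> real) \<Rightarrow> ('a \<Rightarrow> 'a \<Rightarrow> real) \<Rightarrow> ('a \<Rightarrow> real) \<Rightarrow> ('a \<Rightarrow> real)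
    \<Rightarrow> 'a list \<Rightarrow> real \<times> real" where
  "mkey c1 c2 h1 h2 x = (pcost c1 x + h1 (last x), pcost c2 x + h2 (last x))"

definition ms_process ::
  "('a \<times> 'a) set \<Rightarrow> ('a \<Rightarrow> 'a \<Rightarrow> real) \<Rightarrow> ('a \<Rightarrow> 'a \<Rightarrow> real) \<Rightarrow> real \<Rightarrow> 'a set
   \<Rightarrow> ('a \<Rightarrow> real) \<Rightarrow> ('a \<Rightarrow> real) \<Rightarrow> ('a \<Rightarrow> real) \<Rightarrow> ('a \<Rightarrow> real)
   \<Rightarrow> 'a list \<Rightarrow> 'a ms \<Rightarrow> 'a ms" where
  "ms_process E c1 c2 W X h1 h2 ub1 ub2 x \<sigma> =
    (let u = last x; ga = pcost c1 x; gb = pcost c2 x;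
         \<sigma>1 = \<sigma>\<lparr>ms_open := ms_open \<sigma> - {#x#}, ms_gmin := (ms_gmin \<sigma>)(u := ereal gb)\<rparr>;
         fa' = ga + ub1 u; fb' = gb + ub2 u; fx1 = ga + h1 u;
         \<sigma>2 = (if fb' \<le> W then
                 (if ereal fx1 < ms_f1bar \<sigma>1 \<or> ereal fb' < ms_f2sol \<sigma>1
                  then \<sigma>1\<lparr>ms_f1bar := ereal fx1, ms_f2sol := ereal fb', ms_sol := Some x\<rparr>
                  else \<sigma>1)
               else if ereal fa' < ms_f1bar \<sigma>1
                 then \<sigma>1\<lparr>ms_f1bar := ereal fa', ms_f2sol := \<infinity>\<rparr>
                 else \<sigma>1)
     in if h1 u = ub1 u then \<sigma>2
        else \<sigma>2\<lparr>ms_open := ms_open \<sigma>2 +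
               mset_set {x @ [v] | v. (u, v) \<in> E \<and> v \<in> X \<and>
                  \<not> (ereal (gb + c2 u v) \<ge> ms_gmin \<sigma>2 v) \<and>
                  \<not> (ereal (ga + c1 u v + h1 v) > ms_f1bar \<sigma>2) \<and>
                  \<not> (gb + c2 u v + h2 v > W)}\<rparr>)"

inductive ms_step for E :: "('a \<times> 'a) set" and c1 c2 :: "'a \<Rightarrow> 'a \<Rightarrow> real" and W :: real
  and X :: "'a set" and h1 h2 ub1 ub2 :: "'a \<Rightarrow> real" where
  empty: "\<not> ms_halted \<sigma> \<Longrightarrow> ms_open \<sigma> = {#} \<Longrightarrow>
    ms_step E c1 c2 W X h1 h2 ub1 ub2 \<sigma> (\<sigma>\<lparr>ms_halted := True\<rparr>)"
| stop: "\<not> ms_halted \<sigma> \<Longrightarrow> x \<in># ms_open \<sigma> \<Longrightarrow> (\<forall>y\<in>#ms_open \<sigma>. mkey c1 c2 h1 h2 x \<le> mkey c1 c2 h1 h2 y) \<Longrightarrow>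
    ereal (fst (mkey c1 c2 h1 h2 x)) > ms_f1bar \<sigma> \<Longrightarrow>
    ms_step E c1 c2 W X h1 h2 ub1 ub2 \<sigma> (\<sigma>\<lparr>ms_open := ms_open \<sigma> - {#x#}, ms_halted := True\<rparr>)"
| discard: "\<not> ms_halted \<sigma> \<Longrightarrow> x \<in># ms_open \<sigma> \<Longrightarrow> (\<forall>y\<in>#ms_open \<sigma>. mkey c1 c2 h1 h2 x \<le> mkey c1 c2 h1 h2 y) \<Longrightarrow>
    \<not> (ereal (fst (mkey c1 c2 h1 h2 x)) > ms_f1bar \<sigma>) \<Longrightarrow>
    ereal (pcost c2 x) \<ge> ms_gmin \<sigma> (last x) \<Longrightarrow>
    ms_step E c1 c2 W X h1 h2 ub1 ub2 \<sigma> (\<sigma>\<lparr>ms_open := ms_open \<sigma> - {#x#}\<rparr>)"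
| process: "\<not> ms_halted \<sigma> \<Longrightarrow> x \<in># ms_open \<sigma> \<Longrightarrow> (\<forall>y\<in>#ms_open \<sigma>. mkey c1 c2 h1 h2 x \<le> mkey c1 c2 h1 h2 y) \<Longrightarrow>
    \<not> (ereal (fst (mkey c1 c2 h1 h2 x)) > ms_f1bar \<sigma>) \<Longrightarrow>
    \<not> (ereal (pcost c2 x) \<ge> ms_gmin \<sigma> (last x)) \<Longrightarrow>
    ms_step E c1 c2 W X h1 h2 ub1 ub2 \<sigma> (ms_process E c1 c2 W X h1 h2 ub1 ub2 x \<sigma>)"

definition ms_init :: "'a \<Rightarrow> 'a set \<Rightarrow> ereal \<Rightarrow> 'a ms" where
  "ms_init start X F = \<lparr>ms_open = (if start \<in> X then {#[start]#} else {#}),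
     ms_gmin = (\<lambda>_. \<infinity>), ms_f1bar = F, ms_f2sol = \<infinity>, ms_sol = None, ms_halted = False\<rparr>"

end

theory Submission
  imports Defs
begin

definition nonneg :: "('a \<times> 'a) set \<Rightarrow> ('a \<Rightarrow> 'a \<Rightarrow> real) \<Rightarrow> bool" where
  "nonneg E c \<longleftrightarrow> (\<forall>(a,b)\<in>E. c a b \<ge> 0)"

lemma pcost_Nil[simp]: "pcost c [] = 0" and pcost_single[simp]: "pcost c [a] = 0"
  by simp_all

lemma pcost_split: "pcost c (xs @ y # ys) = pcost c (xs @ [y]) + pcost c (y # ys)"
proof (induction xs)
  case Nil then show ?case by simp
next
  case (Cons x xs)
  then show ?case by (cases xs) auto
qed

lemma pcost_glue:
  assumes "y \<noteq> []" "r \<noteq> []" "hd r = last y"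
  shows "pcost c (y @ tl r) = pcost c y + pcost c r"
proof -
  obtain ys a where y: "y = ys @ [a]" using assms(1) by (metis append_butlast_last_id)
  obtain b rs where r: "r = b # rs" using assms(2) by (cases r) auto
  have "b = a" using assms(3) y r by simp
  then show ?thesis using pcost_split[of c ys a rs] y r by simp
qed

lemma pcost_snoc: "xs \<noteq> [] \<Longrightarrow> pcost c (xs @ [w]) = pcost c xs + c (last xs) w"
proof -
  assume "xs \<noteq> []"
  then obtain ys a where y: "xs = ys @ [a]" by (metis append_butlast_last_id)
  show ?thesis using pcost_split[of c ys a "[w]"] y by simp
qed

lemma pcost_nonneg:
  assumes "nonneg E c" "successively (\<lambda>a b. (a, b) \<in> E) p"
  shows "pcost c p \<ge> 0"
  using assms(2)
proof (induction p rule: induct_list012)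
  case (3 x y zs)
  then have "(x,y) \<in> E" "successively (\<lambda>a b. (a, b) \<in> E) (y # zs)" by auto
  with 3 assms(1) show ?case unfolding nonneg_def by fastforce
qed auto

lemma is_path_Cons: "is_path E u v (u # w # r) \<longleftrightarrow> (u, w) \<in> E \<and> is_path E w v (w # r)"
  unfolding is_path_def by auto

lemma is_path_single[simp]: "is_path E u v [x] \<longleftrightarrow> u = x \<and> v = x"
  unfolding is_path_def by auto

lemma is_path_glue:
  assumes "is_path E u v y" "is_path E v w r"
  shows "is_path E u w (y @ tl r)"
proof -
  obtain b rs where r: "r = b # rs" using assms(2) unfolding is_path_def by (cases r) auto
  have b: "b = v" using assms(2) r unfolding is_path_def by simp
  obtain ys where y: "y = ys @ [v]" using assms(1) unfolding is_path_def
    by (metis append_butlast_last_id)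
  have s1: "successively (\<lambda>a b. (a, b) \<in> E) (ys @ [v])" using assms(1) y unfolding is_path_def by simp
  have s2: "successively (\<lambda>a b. (a, b) \<in> E) (v # rs)" using assms(2) r b unfolding is_path_def by simp
  have "successively (\<lambda>a b. (a, b) \<in> E) (ys @ v # rs)"
    using s1 s2 by (cases ys rule: rev_cases) (auto simp: successively_append_iff)
  then show ?thesis using assms unfolding is_path_def r b y
    by (cases rs; cases ys) auto
qed

lemma is_path_snoc:
  assumes "is_path E u v y" "(v, w) \<in> E"
  shows "is_path E u w (y @ [w])"
  using is_path_glue[OF assms(1), of w "[v,w]"] assms(2) by (simp add: is_path_def)

lemma successively_set:
  assumes "E \<subseteq> S \<times> S" "successively (\<lambda>a b. (a, b) \<in> E) (x # p)"
  shows "set p \<subseteq> S"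
  using assms(2)
proof (induction p arbitrary: x)
  case (Cons a p)
  then show ?case using assms(1) by auto
qed auto

lemma path_set: "E \<subseteq> S \<times> S \<Longrightarrow> is_path E u v p \<Longrightarrow> set p \<subseteq> insert u S"
  unfolding is_path_def by (cases p) (auto dest: successively_set)

lemma shorten:
  assumes "is_path E u v p"
  shows "\<exists>p'. is_path E u v p' \<and> distinct p' \<and> set p' \<subseteq> set p \<and>
     (\<forall>c. nonneg E c \<longrightarrow> pcost c p' \<le> pcost c p)"
  using assms
proof (induction "length p" arbitrary: p rule: less_induct)
  case less
  show ?case
  proof (cases "distinct p")
    case True then show ?thesis using less.prems by blast
  next
    case False
    then obtain xs y ys zs where p: "p = xs @ y # ys @ y # zs"
      using not_distinct_decomp[of p] by auto
    let ?q = "xs @ y # zs"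
    have sp: "successively (\<lambda>a b. (a, b) \<in> E) p" using less.prems unfolding is_path_def by simp
    have s1: "successively (\<lambda>a b. (a, b) \<in> E) (xs @ [y])"
      using sp unfolding p by (auto simp: successively_append_iff)
    have s2: "successively (\<lambda>a b. (a, b) \<in> E) (y # ys @ [y])"
    proof -
      have "p = xs @ ((y # ys @ [y]) @ zs)" unfolding p by simp
      then have "successively (\<lambda>a b. (a, b) \<in> E) ((y # ys @ [y]) @ zs)"
        using sp successively_append_iff[of _ xs] by metis
      then show ?thesis using successively_append_iff[of _ "y # ys @ [y]" zs] by blast
    qed
    have s3: "successively (\<lambda>a b. (a, b) \<in> E) (y # zs)"
    proof -
      have "p = (xs @ y # ys) @ (y # zs)" unfolding p by simp
      then show ?thesis using sp successively_append_iff[of _ "xs @ y # ys" "y # zs"] by metis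
    qed
    have sq: "successively (\<lambda>a b. (a, b) \<in> E) ?q"
      using s1 s3 by (cases xs rule: rev_cases) (auto simp: successively_append_iff)
    have "is_path E u v ?q"
      using less.prems sq unfolding is_path_def p by (cases xs) auto
    moreover have "length ?q < length p" unfolding p by simp
    ultimately obtain p' where p': "is_path E u v p'" "distinct p'" "set p' \<subseteq> set ?q"
      "\<forall>c. nonneg E c \<longrightarrow> pcost c p' \<le> pcost c ?q"
      using less.hyps by blast
    have "\<forall>c. nonneg E c \<longrightarrow> pcost c ?q \<le> pcost c p"
    proof (intro allI impI)
      fix c assume c: "nonneg E c"
      have "pcost c p = pcost c (xs @ [y]) + pcost c (y # ys @ [y]) + pcost c (y # zs)"
        unfolding p using pcost_split[of c xs y "ys @ y # zs"] pcost_split[of c "y # ys" y zs] by simp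
      moreover have "pcost c ?q = pcost c (xs @ [y]) + pcost c (y # zs)"
        using pcost_split[of c xs y zs] by simp
      moreover have "pcost c (y # ys @ [y]) \<ge> 0" using pcost_nonneg[OF c s2] .
      ultimately show "pcost c ?q \<le> pcost c p" by linarith
    qed
    moreover have "set ?q \<subseteq> set p" unfolding p by auto
    ultimately show ?thesis using p' by (meson order_trans)
  qed
qed

lemma finite_distinct_paths:
  assumes "finite S" "E \<subseteq> S \<times> S"
  shows "finite {p. is_path E u v p \<and> distinct p}"
proof -
  let ?T = "insert u S"
  have "{p. is_path E u v p \<and> distinct p} \<subseteq> {xs. set xs \<subseteq> ?T \<and> length xs \<le> card ?T}"
  proof safe
    fix p assume "is_path E u v p" "distinct p"
    then have "set p \<subseteq> ?T" using path_set[OF assms(2)] by blast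
    moreover have "length p = card (set p)" using \<open>distinct p\<close> by (simp add: distinct_card)
    ultimately show "length p \<le> card ?T" using assms(1) by (metis card_mono finite_insert)
  qed (use path_set[OF assms(2)] in blast)
  moreover have "finite {xs. set xs \<subseteq> ?T \<and> length xs \<le> card ?T}"
    using assms(1) by (intro finite_lists_length_le) auto
  ultimately show ?thesis by (rule finite_subset)
qed

lemma path_lexmin:
  assumes "finite S" "E \<subseteq> S \<times> S" "nonneg E c" "nonneg E d"
    and QP: "\<And>p. Q p \<Longrightarrow> is_path E u v p"
    and Qc: "\<And>p p'. Q p \<Longrightarrow> is_path E u v p' \<Longrightarrow> set p' \<subseteq> set p \<Longrightarrow>
               pcost c p' \<le> pcost c p \<Longrightarrow> pcost d p' \<le> pcost d p \<Longrightarrow> Q p'"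
    and ex: "Q p1"
  shows "\<exists>p0. Q p0 \<and> (\<forall>p. Q p \<longrightarrow> (pcost c p0, pcost d p0) \<le> (pcost c p, pcost d p))"
proof -
  let ?F = "{p. Q p \<and> distinct p}"
  let ?f = "\<lambda>p. (pcost c p, pcost d p)"
  have fin: "finite ?F"
    by (rule finite_subset[OF _ finite_distinct_paths[OF assms(1,2), of u v]]) (auto dest: QP)
  have shr: "\<exists>p'. p' \<in> ?F \<and> pcost c p' \<le> pcost c p \<and> pcost d p' \<le> pcost d p" if Qp: "Q p" for p
  proof -
    obtain p' where "is_path E u v p'" "distinct p'" "set p' \<subseteq> set p"
      "\<forall>c. nonneg E c \<longrightarrow> pcost c p' \<le> pcost c p"
      using shorten[OF QP[OF Qp]] by metis
    then show ?thesis using Qc[OF Qp] assms(3,4) by blast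
  qed
  have ne: "?F \<noteq> {}" using shr[OF ex] by blast
  define m where "m = Min (?f ` ?F)"
  have "m \<in> ?f ` ?F" unfolding m_def using fin ne by (intro Min_in) auto
  then obtain p0 where p0: "p0 \<in> ?F" "?f p0 = m" by blast
  have "\<forall>p. Q p \<longrightarrow> ?f p0 \<le> ?f p"
  proof (intro allI impI)
    fix p assume "Q p"
    then obtain p' where p': "p' \<in> ?F" "pcost c p' \<le> pcost c p" "pcost d p' \<le> pcost d p"
      using shr by blast
    have "?f p0 \<le> ?f p'" unfolding p0(2) m_def using fin p'(1) by (intro Min_le) auto
    also have "?f p' \<le> ?f p" using p'(2,3) by auto
    finally show "?f p0 \<le> ?f p" .
  qed
  then show ?thesis using p0 by blast
qed


lemma run_terminates_intro:
  assumes inv0: "I s0" and invs: "\<And>s t. I s \<Longrightarrow> R s t \<Longrightarrow> I t"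
    and dec: "\<And>s t. I s \<Longrightarrow> R s t \<Longrightarrow> (t, s) \<in> r" and wf: "wf r"
    and prog: "\<And>s. I s \<Longrightarrow> \<not> H s \<Longrightarrow> \<exists>t. R s t"
  shows "run_terminates R H s0"
proof -
  have reach: "I s" if "R\<^sup>*\<^sup>* s0 s" for s
    using that by (induction rule: rtranclp_induct) (auto intro: inv0 invs)
  have "\<not> (\<exists>f. f 0 = s0 \<and> (\<forall>n. R (f n) (f (Suc n))))"
  proof
    assume "\<exists>f. f 0 = s0 \<and> (\<forall>n. R (f n) (f (Suc n)))"
    then obtain f where f: "f 0 = s0" "\<And>n. R (f n) (f (Suc n))" by blast
    have If: "I (f n)" for n by (induction n) (auto simp: f(1) inv0 intro: invs f(2))
    have "\<forall>i. (f (Suc i), f i) \<in> r" using dec[OF If f(2)] by blast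
    then show False using wf unfolding wf_iff_no_infinite_down_chain by blast
  qed
  then show ?thesis unfolding run_terminates_def using reach prog by blast
qed

lemma successively_set2:
  assumes "E \<subseteq> S \<times> S" "successively (\<lambda>a b. (a, b) \<in> E) (x # y # p)"
  shows "set (x # y # p) \<subseteq> S"
  using successively_set[OF assms] assms by auto

lemma path_set': "E \<subseteq> S \<times> S \<Longrightarrow> is_path E u v p \<Longrightarrow> set p \<subseteq> insert v S"
proof -
  assume a: "E \<subseteq> S \<times> S" "is_path E u v p"
  show ?thesis
  proof (cases p rule: remdups_adj.cases)
    case 1 then show ?thesis using a unfolding is_path_def by simp
  next
    case (2 x) then show ?thesis using a unfolding is_path_def by auto
  next
    case (3 x y xs) then show ?thesis using a successively_set2[of E S x y xs] unfolding is_path_def by auto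
  qed
qed

lemma finite_distinct_paths_to:
  assumes "finite S" "E \<subseteq> S \<times> S"
  shows "finite {p. (\<exists>u. is_path E u v p) \<and> distinct p}"
proof -
  let ?T = "insert v S"
  have "{p. (\<exists>u. is_path E u v p) \<and> distinct p} \<subseteq> {xs. set xs \<subseteq> ?T \<and> length xs \<le> card ?T}"
  proof safe
    fix p u assume "is_path E u v p" "distinct p"
    then have "set p \<subseteq> ?T" using path_set'[OF assms(2)] by blast
    moreover have "length p = card (set p)" using \<open>distinct p\<close> by (simp add: distinct_card)
    ultimately show "length p \<le> card ?T" using assms(1) by (metis card_mono finite_insert)
  qed (use path_set'[OF assms(2)] in blast)
  moreover have "finite {xs. set xs \<subseteq> ?T \<and> length xs \<le> card ?T}"
    using assms(1) by (intro finite_lists_length_le) auto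
  ultimately show ?thesis by (rule finite_subset)
qed

lemma successively_take: "successively P xs \<Longrightarrow> successively P (take k xs)"
  by (metis append_take_drop_id successively_append_iff)

lemma successively_drop: "successively P xs \<Longrightarrow> successively P (drop k xs)"
  by (metis append_take_drop_id successively_append_iff)

lemma pcost_take_drop:
  assumes "k < length p"
  shows "pcost c p = pcost c (take (Suc k) p) + pcost c (drop k p)"
proof -
  have "p = take k p @ (p ! k) # drop (Suc k) p" using assms by (simp add: id_take_nth_drop)
  then have "pcost c p = pcost c (take k p @ [p ! k]) + pcost c (p ! k # drop (Suc k) p)"
    using pcost_split by metis
  moreover have "take (Suc k) p = take k p @ [p ! k]" using assms by (simp add: take_Suc_conv_app_nth)
  moreover have "drop k p = p ! k # drop (Suc k) p" using assms by (simp add: Cons_nth_drop_Suc)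
  ultimately show ?thesis by simp
qed

lemma pcost_drop_le:
  assumes "nonneg E c" "successively (\<lambda>a b. (a, b) \<in> E) p"
  shows "pcost c (drop k p) \<le> pcost c p"
proof (cases "k < length p")
  case True
  have "pcost c (take (Suc k) p) \<ge> 0" using pcost_nonneg[OF assms(1) successively_take[OF assms(2)]] .
  then show ?thesis using pcost_take_drop[OF True, of c] by linarith
next
  case False
  then show ?thesis using pcost_nonneg[OF assms] by simp
qed

lemma pcost_take_le:
  assumes "nonneg E c" "successively (\<lambda>a b. (a, b) \<in> E) p"
  shows "pcost c (take k p) \<le> pcost c p"
proof (cases "k < length p")
  case True
  show ?thesis
  proof (cases k)
    case 0 then show ?thesis using pcost_nonneg[OF assms] by simp
  next
    case (Suc j)
    have "pcost c (drop j p) \<ge> 0" using pcost_nonneg[OF assms(1) successively_drop[OF assms(2)]] .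
    then show ?thesis using pcost_take_drop[of j p c] True Suc by simp
  qed
next
  case False
  then show ?thesis by simp
qed

lemma pcost_Cons2: "pcost c (u # v # r) = c u v + pcost c (v # r)" by simp

lemma pcost_Cons_hd: "r \<noteq> [] \<Longrightarrow> pcost c (u # r) = c u (hd r) + pcost c r"
  by (cases r) auto


lemma mem_diff_single: "y \<in># M \<Longrightarrow> y \<noteq> x \<Longrightarrow> y \<in># M - {#x#}"
  by (simp add: in_diff_count)

lemma mset_min_exists:
  fixes f :: "'b \<Rightarrow> 'c::linorder"
  assumes "M \<noteq> {#}"
  shows "\<exists>x. x \<in># M \<and> (\<forall>y\<in>#M. f x \<le> f y)"
proof -
  let ?m = "Min (f ` set_mset M)"
  have "?m \<in> f ` set_mset M" using assms by (intro Min_in) auto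
  from imageE[OF this] obtain x where x: "x \<in># M" "f x = ?m" by metis
  have "\<forall>y\<in>#M. f x \<le> f y" using x(2) by auto
  then show ?thesis using x(1) by blast
qed

lemma lex_add_mono: "((a::real), (b::real)) \<le> (c, d) \<Longrightarrow> (a + x, b + y) \<le> (c + x, d + y)"
  by auto

lemma lex_of_le: "(a::real) \<le> c \<Longrightarrow> (b::real) \<le> d \<Longrightarrow> (a, b) \<le> (c, d)"
  by auto

lemma lex_fst: "((a::real), (b::real)) \<le> (c, d) \<Longrightarrow> a \<le> c"
  by auto

locale bsloc =
  fixes S :: "'a set" and E :: "('a \<times> 'a) set" and p q :: "'a \<Rightarrow> 'a \<Rightarrow> real"
    and h :: "'a \<Rightarrow> real" and A :: "'a set" and B :: ereal and goal :: 'a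
  assumes finS: "finite S" and ES: "E \<subseteq> S \<times> S" and nnp: "nonneg E p" and nnq: "nonneg E q"
begin

abbreviation "step \<equiv> bs_step E p q h A B"

definition nodeok :: "'a bs \<Rightarrow> 'a \<Rightarrow> real \<Rightarrow> real \<Rightarrow> 'a list \<Rightarrow> bool" where
  "nodeok \<sigma> v a b \<rho> \<longleftrightarrow> is_path E v goal \<rho> \<and> set \<rho> \<subseteq> A \<and> pcost p \<rho> = a \<and> pcost q \<rho> = b \<and>
     distinct (tl \<rho>) \<and> (\<forall>k. 0 < k \<and> k < length \<rho> \<longrightarrow>
        (\<exists>bb. bs_best \<sigma> (\<rho> ! k) = Some bb \<and> bb \<le> (pcost p (drop k \<rho>), pcost q (drop k \<rho>))))"

definition invT :: "'a bs \<Rightarrow> bool" where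
  "invT \<sigma> \<longleftrightarrow> (\<forall>x\<in>#bs_open \<sigma>. \<exists>\<rho>. nodeok \<sigma> (fst x) (fst (snd x)) (snd (snd x)) \<rho>) \<and>
     (\<forall>v. bs_best \<sigma> v \<noteq> None \<longrightarrow> (\<exists>\<rho>. is_path E v goal \<rho> \<and> set \<rho> \<subseteq> A))"

lemma nodeok_mono:
  assumes "nodeok \<sigma> u a b \<rho>"
    and "\<And>w bb. bs_best \<sigma> w = Some bb \<Longrightarrow> \<exists>bb'. bs_best \<sigma>' w = Some bb' \<and> bb' \<le> bb"
  shows "nodeok \<sigma>' u a b \<rho>"
  using assms unfolding nodeok_def by (meson order_trans)

lemma nodeok_same:
  assumes "nodeok \<sigma> u a b \<rho>" "bs_best \<sigma>' = bs_best \<sigma>"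
  shows "nodeok \<sigma>' u a b \<rho>"
  using assms unfolding nodeok_def by simp

lemma path_succ: "is_path E u v \<rho> \<Longrightarrow> successively (\<lambda>a b. (a, b) \<in> E) \<rho>"
  unfolding is_path_def by simp

lemma val_drop_le:
  assumes "is_path E u v \<rho>"
  shows "(pcost p (drop k \<rho>), pcost q (drop k \<rho>)) \<le> (pcost p \<rho>, pcost q \<rho>)"
  using pcost_drop_le[OF nnp path_succ[OF assms]] pcost_drop_le[OF nnq path_succ[OF assms]]
  by (intro lex_of_le)

lemma expand_distinct:
  assumes "nodeok \<sigma> v gp gq \<rho>"
    and "bs_best \<sigma> v = None \<or> (\<exists>b. bs_best \<sigma> v = Some b \<and> (gp, gq) < b)"
  shows "distinct \<rho>"
proof -
  have P: "is_path E v goal \<rho>" and D: "distinct (tl \<rho>)"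
    and c: "pcost p \<rho> = gp" "pcost q \<rho> = gq" using assms(1) unfolding nodeok_def by auto
  obtain t where \<rho>: "\<rho> = v # t" using P unfolding is_path_def by (cases \<rho>) auto
  have "v \<notin> set t"
  proof
    assume "v \<in> set t"
    then obtain j where j: "j < length t" "t ! j = v" by (meson in_set_conv_nth)
    let ?k = "Suc j"
    have "0 < ?k \<and> ?k < length \<rho>" using j \<rho> by simp
    then obtain bb where bb: "bs_best \<sigma> (\<rho> ! ?k) = Some bb"
      "bb \<le> (pcost p (drop ?k \<rho>), pcost q (drop ?k \<rho>))"
      using assms(1) unfolding nodeok_def by blast
    have "\<rho> ! ?k = v" using j \<rho> by simp
    moreover have "bb \<le> (gp, gq)" using order_trans[OF bb(2) val_drop_le[OF P, of ?k]] c by simp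
    ultimately show False using assms(2) bb(1) by auto
  qed
  then show ?thesis using D \<rho> by simp
qed

lemma child_nodeok:
  assumes "nodeok \<sigma> v gp gq \<rho>" "distinct \<rho>" "(w, v) \<in> E" "w \<in> A"
    and b1: "bs_best \<sigma>' v = Some (gp, gq)"
    and b2: "\<And>u. u \<noteq> v \<Longrightarrow> bs_best \<sigma>' u = bs_best \<sigma> u"
  shows "nodeok \<sigma>' w (gp + p w v) (gq + q w v) (w # \<rho>)"
proof -
  have P: "is_path E v goal \<rho>" and A: "set \<rho> \<subseteq> A"
    and c: "pcost p \<rho> = gp" "pcost q \<rho> = gq" using assms(1) unfolding nodeok_def by auto
  obtain t where \<rho>: "\<rho> = v # t" using P unfolding is_path_def by (cases \<rho>) auto
  have P': "is_path E w goal (w # \<rho>)"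
    using P assms(3) unfolding \<rho> by (simp add: is_path_Cons)
  have c': "pcost p (w # \<rho>) = gp + p w v" "pcost q (w # \<rho>) = gq + q w v"
    using c unfolding \<rho> by auto
  have K: "\<exists>bb. bs_best \<sigma>' ((w # \<rho>) ! k) = Some bb \<and>
            bb \<le> (pcost p (drop k (w # \<rho>)), pcost q (drop k (w # \<rho>)))"
    if k: "0 < k" "k < length (w # \<rho>)" for k
  proof (cases k)
    case 0 then show ?thesis using k by simp
  next
    case (Suc j)
    show ?thesis
    proof (cases j)
      case 0
      then show ?thesis using Suc b1 c \<rho> by simp
    next
      case (Suc i)
      have jl: "0 < j" "j < length \<rho>" using k \<open>k = Suc j\<close> Suc by auto
      then obtain bb where bb: "bs_best \<sigma> (\<rho> ! j) = Some bb"
        "bb \<le> (pcost p (drop j \<rho>), pcost q (drop j \<rho>))"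
        using assms(1) unfolding nodeok_def by blast
      have "\<rho> ! j \<noteq> v"
        using assms(2) jl \<rho> by (metis nth_Cons_0 nth_eq_iff_index_eq zero_less_iff_neq_zero length_pos_if_in_set nth_mem)
      then show ?thesis using bb b2 \<open>k = Suc j\<close> by simp
    qed
  qed
  show ?thesis unfolding nodeok_def using P' A assms(4) c' assms(2) K by auto
qed

lemma invT_init: "invT (bs_init goal A)"
  unfolding invT_def bs_init_def nodeok_def by (auto simp: is_path_def)

lemma invT_step:
  assumes "invT \<sigma>" "step \<sigma> \<sigma>'"
  shows "invT \<sigma>'"
  using assms(2)
proof cases
  case (empty)
  then show ?thesis using assms(1) unfolding invT_def nodeok_def by simp
next
  case (stop x)
  then show ?thesis using assms(1) unfolding invT_def nodeok_def by simp
next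
  case (discard x v gp gq b)
  then show ?thesis using assms(1) unfolding invT_def nodeok_def by (auto dest: in_diffD)
next
  case (expand x v gp gq)
  obtain \<rho> where \<rho>: "nodeok \<sigma> v gp gq \<rho>" using assms(1) expand unfolding invT_def by fastforce
  have D: "distinct \<rho>" using expand_distinct[OF \<rho>] expand by blast
  have b1: "bs_best \<sigma>' v = Some (gp, gq)" using expand by simp
  have b2: "\<And>u. u \<noteq> v \<Longrightarrow> bs_best \<sigma>' u = bs_best \<sigma> u" using expand by simp
  have mono: "\<exists>bb'. bs_best \<sigma>' w = Some bb' \<and> bb' \<le> bb" if "bs_best \<sigma> w = Some bb" for w bb
  proof (cases "w = v")
    case True then show ?thesis using expand that b1 by auto
  next
    case False then show ?thesis using b2 that by auto
  qed
  let ?C = "{(w, gp + p w v, gq + q w v) | w. (w, v) \<in> E \<and> w \<in> A}"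
  have fin: "finite ?C"
  proof -
    have "?C \<subseteq> (\<lambda>w. (w, gp + p w v, gq + q w v)) ` fst ` E" by force
    moreover have "finite E" using finS ES by (meson finite_SigmaI finite_subset)
    ultimately show ?thesis by (meson finite_imageI finite_subset)
  qed
  have op: "bs_open \<sigma>' = bs_open \<sigma> - {#x#} + mset_set ?C" using expand by simp
  have A1: "\<exists>\<rho>. nodeok \<sigma>' (fst y) (fst (snd y)) (snd (snd y)) \<rho>" if "y \<in># bs_open \<sigma>'" for y
  proof -
    from that op have "y \<in># bs_open \<sigma> \<or> y \<in> ?C" using fin by (auto dest: in_diffD)
    then show ?thesis
    proof
      assume "y \<in># bs_open \<sigma>"
      then obtain \<rho>' where "nodeok \<sigma> (fst y) (fst (snd y)) (snd (snd y)) \<rho>'"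
        using assms(1) unfolding invT_def by blast
      then show ?thesis using nodeok_mono mono by blast
    next
      assume "y \<in> ?C"
      then obtain w where "y = (w, gp + p w v, gq + q w v)" "(w, v) \<in> E" "w \<in> A" by blast
      then show ?thesis using child_nodeok[OF \<rho> D _ _ b1 b2] by auto
    qed
  qed
  have A2: "\<exists>\<rho>. is_path E u goal \<rho> \<and> set \<rho> \<subseteq> A" if "bs_best \<sigma>' u \<noteq> None" for u
  proof (cases "u = v")
    case True then show ?thesis using \<rho> unfolding nodeok_def by blast
  next
    case False then show ?thesis using that b2 assms(1) unfolding invT_def by auto
  qed
  show ?thesis unfolding invT_def using A1 A2 by blast
qed

definition BP :: "('a \<times> real \<times> real) set" where
  "BP = (\<lambda>\<rho>. (hd \<rho>, (pcost p \<rho>, pcost q \<rho>))) ` {\<rho>. (\<exists>u. is_path E u goal \<rho>) \<and> distinct \<rho>}"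

definition mB :: "'a bs \<Rightarrow> nat" where
  "mB \<sigma> = card {(v, val) \<in> BP. bs_best \<sigma> v = None \<or> (\<exists>bb. bs_best \<sigma> v = Some bb \<and> val < bb)}"

lemma finBP: "finite BP"
  unfolding BP_def using finite_distinct_paths_to[OF finS ES] by blast

definition rel :: "('a bs \<times> 'a bs) set" where
  "rel = measures [\<lambda>\<sigma>. if bs_halted \<sigma> then 0 else 1, mB, \<lambda>\<sigma>. size (bs_open \<sigma>)]"

lemma step_dec:
  assumes "invT \<sigma>" "step \<sigma> \<sigma>'"
  shows "(\<sigma>', \<sigma>) \<in> rel"
  using assms(2)
proof cases
  case empty then show ?thesis unfolding rel_def by (intro measures_less) simp
next
  case (stop x) then show ?thesis unfolding rel_def by (intro measures_less) simp
next
  case (discard x v gp gq b)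
  have "mB \<sigma>' = mB \<sigma>" unfolding mB_def using discard by simp
  then show ?thesis unfolding rel_def using discard
    by (intro measures_lesseq measures_less) (auto simp: size_Diff1_less)
next
  case (expand x v gp gq)
  obtain \<rho> where \<rho>: "nodeok \<sigma> v gp gq \<rho>" using assms(1) expand unfolding invT_def by fastforce
  have D: "distinct \<rho>" using expand_distinct[OF \<rho>] expand by blast
  let ?O = "{(v, val) \<in> BP. bs_best \<sigma> v = None \<or> (\<exists>bb. bs_best \<sigma> v = Some bb \<and> val < bb)}"
  let ?N = "{(v, val) \<in> BP. bs_best \<sigma>' v = None \<or> (\<exists>bb. bs_best \<sigma>' v = Some bb \<and> val < bb)}"
  have b1: "bs_best \<sigma>' v = Some (gp, gq)" using expand by simp
  have b2: "\<And>u. u \<noteq> v \<Longrightarrow> bs_best \<sigma>' u = bs_best \<sigma> u" using expand by simp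
  have hyp: "bs_best \<sigma> v = None \<or> (\<exists>b. bs_best \<sigma> v = Some b \<and> (gp, gq) < b)"
    using expand by simp
  have sub: "?N \<subseteq> ?O"
  proof
    fix z assume z: "z \<in> ?N"
    obtain u val where zu: "z = (u, val)" by (cases z) auto
    have BPz: "(u, val) \<in> BP" and h: "bs_best \<sigma>' u = None \<or> (\<exists>bb. bs_best \<sigma>' u = Some bb \<and> val < bb)"
      using z zu by auto
    have "bs_best \<sigma> u = None \<or> (\<exists>bb. bs_best \<sigma> u = Some bb \<and> val < bb)"
    proof (cases "u = v")
      case True
      then have "val < (gp, gq)" using h b1 by auto
      then show ?thesis using True hyp by (metis less_trans)
    next
      case False then show ?thesis using h b2 by auto
    qed
    then show "z \<in> ?O" using BPz zu by auto
  qed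
  have P: "is_path E v goal \<rho>" and c: "pcost p \<rho> = gp" "pcost q \<rho> = gq"
    using \<rho> unfolding nodeok_def by auto
  have hd: "hd \<rho> = v" using P unfolding is_path_def by simp
  have "(v, (gp, gq)) \<in> BP" unfolding BP_def using P D c hd by (intro image_eqI[of _ _ \<rho>]) auto
  then have "(v, (gp, gq)) \<in> ?O - ?N" using hyp b1 by auto
  then have "?N \<subset> ?O" using sub by blast
  then have "mB \<sigma>' < mB \<sigma>" unfolding mB_def
    by (intro psubset_card_mono) (auto intro: finite_subset[OF _ finBP])
  then show ?thesis unfolding rel_def using expand by (intro measures_lesseq measures_less) auto
qed

lemma progress:
  assumes "\<not> bs_halted \<sigma>"
  shows "\<exists>\<sigma>'. step \<sigma> \<sigma>'"
proof (cases "bs_open \<sigma> = {#}")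
  case True then show ?thesis using bs_step.empty[OF assms] by blast
next
  case False
  then obtain x where x: "x \<in># bs_open \<sigma>" "\<forall>y\<in>#bs_open \<sigma>. bkey h x \<le> bkey h y"
    using mset_min_exists[of "bs_open \<sigma>" "bkey h"] by blast
  obtain v gp gq where xv: "x = (v, gp, gq)" by (cases x) auto
  show ?thesis
  proof (cases "ereal (fst (bkey h x)) > B")
    case True then show ?thesis using bs_step.stop[OF assms x] by blast
  next
    case False
    then have le: "ereal (gp + h v) \<le> B" using xv by (simp add: bkey_def not_less)
    show ?thesis
    proof (cases "\<exists>b. bs_best \<sigma> v = Some b \<and> b \<le> (gp, gq)")
      case True
      then obtain b where "bs_best \<sigma> v = Some b" "b \<le> (gp, gq)" by blast
      then show ?thesis using bs_step.discard[OF assms x xv le] by blast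
    next
      case False
      then have "bs_best \<sigma> v = None \<or> (\<exists>b. bs_best \<sigma> v = Some b \<and> (gp, gq) < b)"
        by (cases "bs_best \<sigma> v") (auto simp: not_le)
      then show ?thesis using bs_step.expand[OF assms x xv le] by blast
    qed
  qed
qed

lemma bs_terminates: "run_terminates step bs_halted (bs_init goal A)"
proof (rule run_terminates_intro[of invT _ _ rel])
  show "invT (bs_init goal A)" by (rule invT_init)
  show "\<And>s t. invT s \<Longrightarrow> step s t \<Longrightarrow> invT t" by (rule invT_step)
  show "\<And>s t. invT s \<Longrightarrow> step s t \<Longrightarrow> (t, s) \<in> rel" by (rule step_dec)
  show "wf rel" unfolding rel_def by simp
  show "\<And>s. invT s \<Longrightarrow> \<not> bs_halted s \<Longrightarrow> \<exists>t. step s t" by (rule progress)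
qed

lemma reach_invT: "step\<^sup>*\<^sup>* (bs_init goal A) \<sigma> \<Longrightarrow> invT \<sigma>"
  by (induction rule: rtranclp_induct) (auto intro: invT_init invT_step)

lemma expanded_path:
  assumes "step\<^sup>*\<^sup>* (bs_init goal A) \<sigma>" "v \<in> bs_expanded \<sigma>"
  shows "\<exists>\<rho>. is_path E v goal \<rho> \<and> set \<rho> \<subseteq> A"
  using reach_invT[OF assms(1)] assms(2) unfolding invT_def bs_expanded_def by auto

end


context bsloc
begin

definition Cov :: "'a bs \<Rightarrow> 'a \<Rightarrow> real \<times> real \<Rightarrow> bool" where
  "Cov \<sigma> w val \<longleftrightarrow> (\<exists>a b. (w, a, b) \<in># bs_open \<sigma> \<and> (a, b) \<le> val) \<or>
                    (\<exists>bb. bs_best \<sigma> w = Some bb \<and> bb \<le> val)"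

definition invC :: "'a bs \<Rightarrow> bool" where
  "invC \<sigma> \<longleftrightarrow> (goal \<in> A \<longrightarrow> Cov \<sigma> goal (0, 0)) \<and>
     (\<forall>w w' bb. (w, w') \<in> E \<and> w \<in> A \<and> bs_best \<sigma> w' = Some bb \<longrightarrow>
         Cov \<sigma> w (fst bb + p w w', snd bb + q w w')) \<and>
     (bs_halted \<sigma> \<longrightarrow> (\<forall>y\<in>#bs_open \<sigma>. ereal (fst (bkey h y)) > B))"

lemma Cov_mono: "Cov \<sigma> w val \<Longrightarrow> val \<le> val' \<Longrightarrow> Cov \<sigma> w val'"
  unfolding Cov_def by (meson order_trans)

lemma Cov_step:
  assumes "step \<sigma> \<sigma>'" "Cov \<sigma> w val"
  shows "Cov \<sigma>' w val"
  using assms(1)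
proof cases
  case empty then show ?thesis using assms(2) unfolding Cov_def by simp
next
  case (stop x) then show ?thesis using assms(2) unfolding Cov_def by simp
next
  case (discard x v gp gq b)
  from assms(2)[unfolded Cov_def] show ?thesis
  proof (elim disjE exE conjE)
    fix a b' assume n: "(w, a, b') \<in># bs_open \<sigma>" "(a, b') \<le> val"
    show ?thesis
    proof (cases "(w, a, b') = x")
      case True
      then show ?thesis unfolding Cov_def using discard n by (auto intro: order_trans)
    next
      case False
      then show ?thesis unfolding Cov_def using discard n mem_diff_single[OF n(1) False] by auto
    qed
  next
    fix bb assume "bs_best \<sigma> w = Some bb" "bb \<le> val"
    then show ?thesis unfolding Cov_def using discard by auto
  qed
next
  case (expand x v gp gq)
  have hyp: "bs_best \<sigma> v = None \<or> (\<exists>b. bs_best \<sigma> v = Some b \<and> (gp, gq) < b)"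
    using expand by simp
  from assms(2)[unfolded Cov_def] show ?thesis
  proof (elim disjE exE conjE)
    fix a b' assume n: "(w, a, b') \<in># bs_open \<sigma>" "(a, b') \<le> val"
    show ?thesis
    proof (cases "(w, a, b') = x")
      case True
      then show ?thesis unfolding Cov_def using expand n by (auto intro: order_trans)
    next
      case False
      let ?C = "{(w, gp + p w v, gq + q w v) | w. (w, v) \<in> E \<and> w \<in> A}"
      have op: "bs_open \<sigma>' = (bs_open \<sigma> - {#x#}) + mset_set ?C" using expand by simp
      have "(w, a, b') \<in># (bs_open \<sigma> - {#x#}) + mset_set ?C"
        using mem_diff_single[OF n(1) False] by (simp only: union_iff) blast
      then have "(w, a, b') \<in># bs_open \<sigma>'" by (simp only: op)
      then show ?thesis unfolding Cov_def using n by auto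
    qed
  next
    fix bb assume bb: "bs_best \<sigma> w = Some bb" "bb \<le> val"
    show ?thesis
    proof (cases "w = v")
      case True
      then obtain b0 where "bs_best \<sigma> v = Some b0" "(gp, gq) < b0" using hyp bb by auto
      then have "(gp, gq) \<le> val" using bb True by (metis less_imp_le option.inject order_trans)
      then show ?thesis unfolding Cov_def using expand True by auto
    next
      case False then show ?thesis unfolding Cov_def using expand bb by auto
    qed
  qed
qed

lemma invC_init: "invC (bs_init goal A)"
  unfolding invC_def bs_init_def Cov_def by auto

lemma invC_step:
  assumes "invC \<sigma>" "step \<sigma> \<sigma>'"
  shows "invC \<sigma>'"
proof -
  have C0: "goal \<in> A \<longrightarrow> Cov \<sigma>' goal (0, 0)"
    using assms Cov_step unfolding invC_def by blast
  have C1: "Cov \<sigma>' w (fst bb + p w w', snd bb + q w w')"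
    if "(w, w') \<in> E" "w \<in> A" "bs_best \<sigma>' w' = Some bb" for w w' bb
    using assms(2)
  proof cases
    case empty then show ?thesis using assms(1) that Cov_step[OF assms(2)] unfolding invC_def by auto
  next
    case (stop x) then show ?thesis using assms(1) that Cov_step[OF assms(2)] unfolding invC_def by auto
  next
    case (discard x v gp gq b)
    then show ?thesis using assms(1) that Cov_step[OF assms(2)] unfolding invC_def by auto
  next
    case (expand x v gp gq)
    show ?thesis
    proof (cases "w' = v")
      case True
      then have bb: "bb = (gp, gq)" using expand that by simp
      let ?C = "{(w, gp + p w v, gq + q w v) | w. (w, v) \<in> E \<and> w \<in> A}"
      have fin: "finite ?C"
      proof -
        have "?C \<subseteq> (\<lambda>w. (w, gp + p w v, gq + q w v)) ` fst ` E" by force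
        moreover have "finite E" using finS ES by (meson finite_SigmaI finite_subset)
        ultimately show ?thesis by (meson finite_imageI finite_subset)
      qed
      have "(w, gp + p w v, gq + q w v) \<in># mset_set ?C" using fin that True by simp
      then have "(w, gp + p w v, gq + q w v) \<in># (bs_open \<sigma> - {#x#}) + mset_set ?C"
        by (simp only: union_iff) blast
      moreover have "bs_open \<sigma>' = (bs_open \<sigma> - {#x#}) + mset_set ?C" using expand True by simp
      ultimately have "(w, gp + p w v, gq + q w v) \<in># bs_open \<sigma>'" by (simp only:)
      then show ?thesis unfolding Cov_def bb using True by auto
    next
      case False
      then have "bs_best \<sigma> w' = Some bb" using expand that by simp
      then show ?thesis using assms(1) that Cov_step[OF assms(2)] unfolding invC_def by auto
    qed
  qed
  have C2: "bs_halted \<sigma>' \<longrightarrow> (\<forall>y\<in>#bs_open \<sigma>'. ereal (fst (bkey h y)) > B)"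
    using assms(2)
  proof cases
    case empty then show ?thesis by simp
  next
    case (stop x)
    have "ereal (fst (bkey h y)) > B" if "y \<in># bs_open \<sigma>" for y
    proof -
      have "bkey h x \<le> bkey h y" using stop that by blast
      then have "fst (bkey h x) \<le> fst (bkey h y)" by (cases "bkey h x"; cases "bkey h y") auto
      then show ?thesis using stop(5) by (meson ereal_less_eq(3) less_le_trans)
    qed
    then show ?thesis using stop by simp
  qed simp_all
  show ?thesis unfolding invC_def using C0 C1 C2 by blast
qed

lemma reach_invC: "step\<^sup>*\<^sup>* (bs_init goal A) \<sigma> \<Longrightarrow> invC \<sigma>"
  by (induction rule: rtranclp_induct) (auto intro: invC_init invC_step)

lemma Cov_halt:
  assumes "invC \<sigma>" "bs_halted \<sigma>" "Cov \<sigma> w val" "ereal (fst val + h w) \<le> B"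
  shows "\<exists>bb. bs_best \<sigma> w = Some bb \<and> bb \<le> val"
proof -
  have "\<not> (\<exists>a b. (w, a, b) \<in># bs_open \<sigma> \<and> (a, b) \<le> val)"
  proof
    assume "\<exists>a b. (w, a, b) \<in># bs_open \<sigma> \<and> (a, b) \<le> val"
    then obtain a b where n: "(w, a, b) \<in># bs_open \<sigma>" "(a, b) \<le> val" by blast
    have "a \<le> fst val" using n(2) by (cases val) auto
    then have e1: "ereal (a + h w) \<le> ereal (fst val + h w)" by simp
    have "ereal (fst (bkey h (w, a, b))) \<le> B" using order_trans[OF e1 assms(4)] unfolding bkey_def
      by simp
    moreover have "ereal (fst (bkey h (w, a, b))) > B" using assms(1,2) n(1) unfolding invC_def by blast
    ultimately show False by simp
  qed
  then show ?thesis using assms(3) unfolding Cov_def by blast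
qed

lemma cover_best:
  assumes R: "step\<^sup>*\<^sup>* (bs_init goal A) \<sigma>" and H: "bs_halted \<sigma>"
  shows "is_path E u goal \<rho> \<Longrightarrow> set \<rho> \<subseteq> A \<Longrightarrow>
    (\<forall>k<length \<rho>. ereal (pcost p (drop k \<rho>) + h (\<rho> ! k)) \<le> B) \<Longrightarrow>
    \<exists>bb. bs_best \<sigma> u = Some bb \<and> bb \<le> (pcost p \<rho>, pcost q \<rho>)"
proof (induction \<rho> arbitrary: u)
  case Nil then show ?case by (simp add: is_path_def)
next
  case (Cons u0 \<rho>')
  have IC: "invC \<sigma>" using reach_invC[OF R] .
  have u0: "u0 = u" using Cons.prems(1) unfolding is_path_def by simp
  show ?case
  proof (cases "\<rho>' = []")
    case True
    then have "u = goal" using Cons.prems(1) u0 by simp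
    then have "Cov \<sigma> goal (0, 0)" using IC Cons.prems(2) u0 unfolding invC_def by auto
    moreover have "ereal (fst (0::real, 0::real) + h goal) \<le> B"
      using Cons.prems(3) True \<open>u = goal\<close> u0 by (auto dest: spec[of _ 0])
    ultimately show ?thesis using Cov_halt[OF IC H] True \<open>u = goal\<close> u0 by auto
  next
    case False
    obtain w r where r: "\<rho>' = w # r" using False by (cases \<rho>') auto
    have e: "(u, w) \<in> E" and P': "is_path E w goal \<rho>'"
      using Cons.prems(1) u0 r by (auto simp: is_path_Cons)
    have cond': "\<forall>k<length \<rho>'. ereal (pcost p (drop k \<rho>') + h (\<rho>' ! k)) \<le> B"
    proof (intro allI impI)
      fix k assume "k < length \<rho>'"
      then show "ereal (pcost p (drop k \<rho>') + h (\<rho>' ! k)) \<le> B"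
        using Cons.prems(3) by (auto dest: spec[of _ "Suc k"])
    qed
    obtain bb where bb: "bs_best \<sigma> w = Some bb" "bb \<le> (pcost p \<rho>', pcost q \<rho>')"
      using Cons.IH[OF P' _ cond'] Cons.prems(2) by auto
    have "Cov \<sigma> u (fst bb + p u w, snd bb + q u w)"
      using IC e Cons.prems(2) u0 bb(1) unfolding invC_def by auto
    moreover have "(fst bb + p u w, snd bb + q u w) \<le> (pcost p (u0 # \<rho>'), pcost q (u0 # \<rho>'))"
      using lex_add_mono[of "fst bb" "snd bb" "pcost p \<rho>'" "pcost q \<rho>'" "p u w" "q u w"] bb(2) r u0
      by (cases bb) (simp add: add.commute)
    ultimately have "Cov \<sigma> u (pcost p (u0 # \<rho>'), pcost q (u0 # \<rho>'))" by (rule Cov_mono)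
    moreover have "ereal (pcost p (u0 # \<rho>') + h u) \<le> B"
      using Cons.prems(3) u0 by (auto dest: spec[of _ 0])
    ultimately show ?thesis using Cov_halt[OF IC H] by auto
  qed
qed

lemma cover_set:
  assumes R: "step\<^sup>*\<^sup>* (bs_init goal A) \<sigma>" and H: "bs_halted \<sigma>"
    and P: "is_path E u goal \<rho>" and sA: "set \<rho> \<subseteq> A"
    and cond: "\<forall>k<length \<rho>. ereal (pcost p (drop k \<rho>) + h (\<rho> ! k)) \<le> B"
  shows "set \<rho> \<subseteq> bs_expanded \<sigma>"
proof
  fix x assume "x \<in> set \<rho>"
  then obtain k where k: "k < length \<rho>" "\<rho> ! k = x" by (meson in_set_conv_nth)
  have P': "is_path E x goal (drop k \<rho>)"
    using P k unfolding is_path_def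
    by (auto simp: successively_drop hd_drop_conv_nth)
  have "\<forall>j<length (drop k \<rho>). ereal (pcost p (drop j (drop k \<rho>)) + h (drop k \<rho> ! j)) \<le> B"
    using cond by (auto simp: add.commute)
  moreover have "set (drop k \<rho>) \<subseteq> A" using sA by (meson order_trans set_drop_subset)
  ultimately show "x \<in> bs_expanded \<sigma>"
    using cover_best[OF R H P'] unfolding bs_expanded_def by auto
qed

end


lemma finite_distinct_paths_from:
  assumes "finite S" "E \<subseteq> S \<times> S"
  shows "finite {p. (\<exists>v. is_path E u v p) \<and> distinct p}"
proof -
  let ?T = "insert u S"
  have "{p. (\<exists>v. is_path E u v p) \<and> distinct p} \<subseteq> {xs. set xs \<subseteq> ?T \<and> length xs \<le> card ?T}"
  proof safe
    fix p v assume "is_path E u v p" "distinct p"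
    then have "set p \<subseteq> ?T" using path_set[OF assms(2)] by blast
    moreover have "length p = card (set p)" using \<open>distinct p\<close> by (simp add: distinct_card)
    ultimately show "length p \<le> card ?T" using assms(1) by (metis card_mono finite_insert)
  qed (use path_set[OF assms(2)] in blast)
  moreover have "finite {xs. set xs \<subseteq> ?T \<and> length xs \<le> card ?T}"
    using assms(1) by (intro finite_lists_length_le) auto
  ultimately show ?thesis by (rule finite_subset)
qed

definition childset :: "('a \<times> 'a) set \<Rightarrow> ('a \<Rightarrow> 'a \<Rightarrow> real) \<Rightarrow> ('a \<Rightarrow> 'a \<Rightarrow> real) \<Rightarrow> real \<Rightarrow> 'a set
   \<Rightarrow> ('a \<Rightarrow> real) \<Rightarrow> ('a \<Rightarrow> real) \<Rightarrow> ('a \<Rightarrow> ereal) \<Rightarrow> ereal \<Rightarrow> 'a list \<Rightarrow> 'a list set" where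
  "childset E c1 c2 W X h1 h2 gm F x = {x @ [v] | v. (last x, v) \<in> E \<and> v \<in> X \<and>
                  \<not> (ereal (pcost c2 x + c2 (last x) v) \<ge> gm v) \<and>
                  \<not> (ereal (pcost c1 x + c1 (last x) v + h1 v) > F) \<and>
                  \<not> (pcost c2 x + c2 (last x) v + h2 v > W)}"

definition newF :: "('a \<Rightarrow> 'a \<Rightarrow> real) \<Rightarrow> ('a \<Rightarrow> 'a \<Rightarrow> real) \<Rightarrow> real
   \<Rightarrow> ('a \<Rightarrow> real) \<Rightarrow> ('a \<Rightarrow> real) \<Rightarrow> ('a \<Rightarrow> real) \<Rightarrow> 'a list \<Rightarrow> 'a ms \<Rightarrow> ereal \<times> ereal \<times> 'a list option" where
  "newF c1 c2 W h1 ub1 ub2 x \<sigma> =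
    (let u = last x; ga = pcost c1 x; gb = pcost c2 x; fa' = ga + ub1 u; fb' = gb + ub2 u; fx1 = ga + h1 u
     in if fb' \<le> W then
          (if ereal fx1 < ms_f1bar \<sigma> \<or> ereal fb' < ms_f2sol \<sigma>
           then (ereal fx1, ereal fb', Some x) else (ms_f1bar \<sigma>, ms_f2sol \<sigma>, ms_sol \<sigma>))
        else if ereal fa' < ms_f1bar \<sigma> then (ereal fa', \<infinity>, ms_sol \<sigma>)
        else (ms_f1bar \<sigma>, ms_f2sol \<sigma>, ms_sol \<sigma>))"

lemma ms_process_fields:
  shows "ms_halted (ms_process E c1 c2 W X h1 h2 ub1 ub2 x \<sigma>) = ms_halted \<sigma>"
    and "ms_gmin (ms_process E c1 c2 W X h1 h2 ub1 ub2 x \<sigma>) = (ms_gmin \<sigma>)(last x := ereal (pcost c2 x))"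
    and "ms_f1bar (ms_process E c1 c2 W X h1 h2 ub1 ub2 x \<sigma>) = fst (newF c1 c2 W h1 ub1 ub2 x \<sigma>)"
    and "ms_f2sol (ms_process E c1 c2 W X h1 h2 ub1 ub2 x \<sigma>) = fst (snd (newF c1 c2 W h1 ub1 ub2 x \<sigma>))"
    and "ms_sol (ms_process E c1 c2 W X h1 h2 ub1 ub2 x \<sigma>) = snd (snd (newF c1 c2 W h1 ub1 ub2 x \<sigma>))"
    and "ms_open (ms_process E c1 c2 W X h1 h2 ub1 ub2 x \<sigma>) = (ms_open \<sigma> - {#x#}) +
          (if h1 (last x) = ub1 (last x) then {#} else mset_set (childset E c1 c2 W X h1 h2
             ((ms_gmin \<sigma>)(last x := ereal (pcost c2 x))) (fst (newF c1 c2 W h1 ub1 ub2 x \<sigma>)) x))"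
  unfolding ms_process_def newF_def childset_def Let_def
  by (simp_all split: if_split)

lemma finite_childset:
  assumes "finite E"
  shows "finite (childset E c1 c2 W X h1 h2 gm F x)"
proof -
  have "childset E c1 c2 W X h1 h2 gm F x \<subseteq> (\<lambda>v. x @ [v]) ` snd ` E"
    unfolding childset_def by force
  then show ?thesis using assms by (meson finite_imageI finite_subset)
qed

locale msterm =
  fixes S :: "'a set" and E :: "('a \<times> 'a) set" and c1 c2 :: "'a \<Rightarrow> 'a \<Rightarrow> real" and W :: real
    and X :: "'a set" and h1 h2 ub1 ub2 :: "'a \<Rightarrow> real" and start :: 'a and F0 :: ereal
  assumes finS: "finite S" and ES: "E \<subseteq> S \<times> S" and nn2: "nonneg E c2"
begin

abbreviation "mstep \<equiv> ms_step E c1 c2 W X h1 h2 ub1 ub2"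

lemma finE: "finite E" using finS ES by (meson finite_SigmaI finite_subset)

definition Tinv :: "'a ms \<Rightarrow> bool" where
  "Tinv \<sigma> \<longleftrightarrow> (\<forall>y\<in>#ms_open \<sigma>. is_path E start (last y) y \<and> distinct y \<and>
      (\<forall>k. 0 < k \<and> k < length y \<longrightarrow> ms_gmin \<sigma> (last (take k y)) \<le> ereal (pcost c2 (take k y))))"

definition MP :: "('a \<times> real) set" where
  "MP = (\<lambda>y. (last y, pcost c2 y)) ` {y. (\<exists>v. is_path E start v y) \<and> distinct y}"

definition mM :: "'a ms \<Rightarrow> nat" where
  "mM \<sigma> = card {(v, a) \<in> MP. ereal a < ms_gmin \<sigma> v}"

definition mrel :: "('a ms \<times> 'a ms) set" where
  "mrel = measures [\<lambda>\<sigma>. if ms_halted \<sigma> then 0 else 1, mM, \<lambda>\<sigma>. size (ms_open \<sigma>)]"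

lemma finMP: "finite MP"
  unfolding MP_def using finite_distinct_paths_from[OF finS ES] by blast

lemma Tinv_init: "Tinv (ms_init start X F0)"
  unfolding Tinv_def ms_init_def by (auto simp: is_path_def)

lemma Tinv_process:
  assumes T: "Tinv \<sigma>" and x: "x \<in># ms_open \<sigma>" and lt: "\<not> (ereal (pcost c2 x) \<ge> ms_gmin \<sigma> (last x))"
  shows "Tinv (ms_process E c1 c2 W X h1 h2 ub1 ub2 x \<sigma>)"
proof -
  let ?\<sigma>' = "ms_process E c1 c2 W X h1 h2 ub1 ub2 x \<sigma>"
  let ?NF = "newF c1 c2 W h1 ub1 ub2 x \<sigma>"
  define gm where "gm = (ms_gmin \<sigma>)(last x := ereal (pcost c2 x))"
  let ?C = "childset E c1 c2 W X h1 h2 gm (fst ?NF) x"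
  have op: "ms_open ?\<sigma>' = (ms_open \<sigma> - {#x#}) +
          (if h1 (last x) = ub1 (last x) then {#} else mset_set ?C)"
    using ms_process_fields(6) unfolding gm_def by metis
  have gmq: "ms_gmin ?\<sigma>' = gm" using ms_process_fields(2) unfolding gm_def by metis
  have gmle: "gm v \<le> ms_gmin \<sigma> v" for v
    using lt unfolding gm_def by (auto simp: not_le less_imp_le)
  have xp: "is_path E start (last x) x" "distinct x"
    and xk: "\<And>k. 0 < k \<Longrightarrow> k < length x \<Longrightarrow> ms_gmin \<sigma> (last (take k x)) \<le> ereal (pcost c2 (take k x))"
    using T x unfolding Tinv_def by auto
  have xne: "x \<noteq> []" using xp unfolding is_path_def by simp
  have old: "is_path E start (last y) y \<and> distinct y \<and>
      (\<forall>k. 0 < k \<and> k < length y \<longrightarrow> gm (last (take k y)) \<le> ereal (pcost c2 (take k y)))"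
    if "y \<in># ms_open \<sigma>" for y
    using T that gmle unfolding Tinv_def by (meson order_trans)
  have new: "is_path E start (last y) y \<and> distinct y \<and>
      (\<forall>k. 0 < k \<and> k < length y \<longrightarrow> gm (last (take k y)) \<le> ereal (pcost c2 (take k y)))"
    if yC: "y \<in> ?C" for y
  proof -
    obtain v where yv: "y = x @ [v]" "(last x, v) \<in> E" "v \<in> X"
      and ng: "\<not> (ereal (pcost c2 x + c2 (last x) v) \<ge> gm v)"
      using yC unfolding childset_def by blast
    have P: "is_path E start (last y) y" using is_path_snoc[OF xp(1) yv(2)] yv(1) by simp
    have c2nn: "c2 (last x) v \<ge> 0" using nn2 yv(2) unfolding nonneg_def by auto
    have K: "gm (last (take k y)) \<le> ereal (pcost c2 (take k y))" if k: "0 < k" "k < length y" for k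
    proof -
      have kx: "take k y = take k x" "k \<le> length x" using k yv(1) by auto
      show ?thesis
      proof (cases "k = length x")
        case True
        then show ?thesis using kx xne unfolding gm_def by simp
      next
        case False
        then have "k < length x" using kx by simp
        then show ?thesis using xk[OF k(1)] gmle kx by (metis order_trans)
      qed
    qed
    have "v \<notin> set x"
    proof
      assume "v \<in> set x"
      then obtain j where j: "j < length x" "x ! j = v" by (meson in_set_conv_nth)
      have lt': "last (take (Suc j) x) = v" using j by (simp add: take_Suc_conv_app_nth)
      have "gm v \<le> ereal (pcost c2 x)"
      proof (cases "Suc j = length x")
        case True
        then have "v = last x" using lt' by simp
        then show ?thesis unfolding gm_def by simp
      next
        case False
        then have "ms_gmin \<sigma> v \<le> ereal (pcost c2 (take (Suc j) x))" using xk[of "Suc j"] j lt' by simp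
        moreover have "pcost c2 (take (Suc j) x) \<le> pcost c2 x"
          using pcost_take_le[OF nn2] xp(1) unfolding is_path_def by blast
        ultimately show ?thesis using gmle[of v] by (meson ereal_less_eq(3) order_trans)
      qed
      then have "gm v \<le> ereal (pcost c2 x + c2 (last x) v)" using c2nn by (simp add: order_trans)
      then show False using ng by simp
    qed
    then have "distinct y" using yv(1) xp(2) by simp
    then show ?thesis using P K by blast
  qed
  show ?thesis unfolding Tinv_def gmq op
    using old new finite_childset[OF finE] by (auto split: if_splits dest: in_diffD)
qed

lemma Tinv_step:
  assumes "Tinv \<sigma>" "mstep \<sigma> \<sigma>'"
  shows "Tinv \<sigma>'"
  using assms(2)
proof cases
  case empty then show ?thesis using assms(1) unfolding Tinv_def by simp
next
  case (stop x) then show ?thesis using assms(1) unfolding Tinv_def by (auto dest: in_diffD)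
next
  case (discard x) then show ?thesis using assms(1) unfolding Tinv_def by (auto dest: in_diffD)
next
  case (process x) then show ?thesis using Tinv_process assms(1) by blast
qed

lemma mstep_dec:
  assumes "Tinv \<sigma>" "mstep \<sigma> \<sigma>'"
  shows "(\<sigma>', \<sigma>) \<in> mrel"
  using assms(2)
proof cases
  case empty then show ?thesis unfolding mrel_def by (intro measures_less) simp
next
  case (stop x) then show ?thesis unfolding mrel_def by (intro measures_less) simp
next
  case (discard x)
  have "mM \<sigma>' = mM \<sigma>" unfolding mM_def using discard by simp
  then show ?thesis unfolding mrel_def using discard
    by (intro measures_lesseq measures_less) (auto simp: size_Diff1_less)
next
  case (process x)
  define gm where "gm = (ms_gmin \<sigma>)(last x := ereal (pcost c2 x))"
  have gmq: "ms_gmin \<sigma>' = gm" using ms_process_fields(2) process unfolding gm_def by metis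
  have hq: "ms_halted \<sigma>' = ms_halted \<sigma>" using ms_process_fields(1) process by metis
  have lt: "ereal (pcost c2 x) < ms_gmin \<sigma> (last x)" using process by (simp add: not_le)
  have xp: "is_path E start (last x) x" "distinct x" using assms(1) process unfolding Tinv_def by auto
  let ?O = "{(v, a) \<in> MP. ereal a < ms_gmin \<sigma> v}"
  let ?N = "{(v, a) \<in> MP. ereal a < ms_gmin \<sigma>' v}"
  have sub: "?N \<subseteq> ?O"
  proof
    fix z assume z: "z \<in> ?N"
    obtain v a where zv: "z = (v, a)" by (cases z) auto
    have "ereal a < ms_gmin \<sigma> v"
    proof (cases "v = last x")
      case True
      then have "ereal a < ereal (pcost c2 x)" using z zv unfolding gmq gm_def by auto
      then show ?thesis using lt True by (meson less_trans)
    next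
      case False then show ?thesis using z zv unfolding gmq gm_def by auto
    qed
    then show "z \<in> ?O" using z zv by auto
  qed
  have "(last x, pcost c2 x) \<in> MP" unfolding MP_def using xp by blast
  then have "(last x, pcost c2 x) \<in> ?O - ?N" using lt unfolding gmq gm_def by auto
  then have "?N \<subset> ?O" using sub by blast
  then have "mM \<sigma>' < mM \<sigma>" unfolding mM_def
    by (intro psubset_card_mono) (auto intro: finite_subset[OF _ finMP])
  then show ?thesis unfolding mrel_def using process hq by (intro measures_lesseq measures_less) auto
qed

lemma mprogress:
  assumes "\<not> ms_halted \<sigma>"
  shows "\<exists>\<sigma>'. mstep \<sigma> \<sigma>'"
proof (cases "ms_open \<sigma> = {#}")
  case True then show ?thesis using ms_step.empty[OF assms] by blast
next
  case False
  then obtain x where x: "x \<in># ms_open \<sigma>" "\<forall>y\<in>#ms_open \<sigma>. mkey c1 c2 h1 h2 x \<le> mkey c1 c2 h1 h2 y"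
    using mset_min_exists[of "ms_open \<sigma>" "mkey c1 c2 h1 h2"] by blast
  show ?thesis
  proof (cases "ereal (fst (mkey c1 c2 h1 h2 x)) > ms_f1bar \<sigma>")
    case True then show ?thesis using ms_step.stop[OF assms x] by blast
  next
    case f: False
    show ?thesis
    proof (cases "ereal (pcost c2 x) \<ge> ms_gmin \<sigma> (last x)")
      case True then show ?thesis using ms_step.discard[OF assms x f] by blast
    next
      case False then show ?thesis using ms_step.process[OF assms x f] by blast
    qed
  qed
qed

lemma ms_terminates: "run_terminates mstep ms_halted (ms_init start X F0)"
proof (rule run_terminates_intro[of Tinv _ _ mrel])
  show "Tinv (ms_init start X F0)" by (rule Tinv_init)
  show "\<And>s t. Tinv s \<Longrightarrow> mstep s t \<Longrightarrow> Tinv t" by (rule Tinv_step)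
  show "\<And>s t. Tinv s \<Longrightarrow> mstep s t \<Longrightarrow> (t, s) \<in> mrel" by (rule mstep_dec)
  show "wf mrel" unfolding mrel_def by simp
  show "\<And>s. Tinv s \<Longrightarrow> \<not> ms_halted s \<Longrightarrow> \<exists>t. mstep s t" by (rule mprogress)
qed

end


locale mscorr = msterm S E c1 c2 W X h1 h2 ub1 ub2 start F0
  for S :: "'a set" and E c1 c2 W X h1 h2 ub1 ub2 start F0 +
  fixes goal :: 'a and o1 o2 :: real and \<pi>0 :: "'a list"
  assumes nn1: "nonneg E c1"
    and cons1: "\<And>v w. v \<in> X \<Longrightarrow> w \<in> X \<Longrightarrow> (v, w) \<in> E \<Longrightarrow> h1 v \<le> c1 v w + h1 w"
    and cons2: "\<And>v w. v \<in> X \<Longrightarrow> w \<in> X \<Longrightarrow> (v, w) \<in> E \<Longrightarrow> h2 v \<le> c2 v w + h2 w"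
    and low1: "\<And>v r. is_path E v goal r \<Longrightarrow> set r \<subseteq> X \<Longrightarrow> h1 v \<le> pcost c1 r"
    and low2: "\<And>v r. is_path E v goal r \<Longrightarrow> set r \<subseteq> X \<Longrightarrow> h2 v \<le> pcost c2 r"
    and real13: "\<And>v. v \<in> X \<Longrightarrow> \<exists>q. is_path E v goal q \<and> pcost c1 q = h1 v \<and> pcost c2 q = ub2 v"
    and real12: "\<And>v x. v \<in> X \<Longrightarrow> is_path E start v x \<Longrightarrow> pcost c2 x + h2 v \<le> W \<Longrightarrow>
                   \<exists>q. is_path E v goal q \<and> pcost c1 q = ub1 v \<and> pcost c2 q = h2 v"
    and ubh: "\<And>v x. v \<in> X \<Longrightarrow> is_path E start v x \<Longrightarrow> pcost c2 x + h2 v \<le> W \<Longrightarrow> h1 v = ub1 v \<Longrightarrow>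
                   ub2 v \<le> h2 v"
    and goalh: "h1 goal = ub1 goal"
    and opt_ex: "is_path E start goal \<pi>0" "pcost c1 \<pi>0 = o1" "pcost c2 \<pi>0 = o2" "set \<pi>0 \<subseteq> X"
    and oW: "o2 \<le> W"
    and opt_min: "\<And>\<pi>. is_path E start goal \<pi> \<Longrightarrow> pcost c2 \<pi> \<le> W \<Longrightarrow>
                   (o1, o2) \<le> (pcost c1 \<pi>, pcost c2 \<pi>)"
    and F0: "ereal o1 \<le> F0"
begin

abbreviation "g1 \<equiv> pcost c1"
abbreviation "g2 \<equiv> pcost c2"
abbreviation "key \<equiv> mkey c1 c2 h1 h2"

definition valid :: "'a list \<Rightarrow> bool" where
  "valid y \<longleftrightarrow> is_path E start (last y) y \<and> set y \<subseteq> X \<and> g2 y + h2 (last y) \<le> W"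

definition Good :: "'a list \<Rightarrow> 'a list \<Rightarrow> bool" where
  "Good y r \<longleftrightarrow> is_path E (last y) goal r \<and> set r \<subseteq> X \<and> g1 y + g1 r = o1 \<and> g2 y + g2 r = o2"

definition Reached :: "'a ms \<Rightarrow> bool" where
  "Reached \<sigma> \<longleftrightarrow> ms_f1bar \<sigma> = ereal o1 \<and> ms_f2sol \<sigma> = ereal o2"

definition DoO :: "'a ms \<Rightarrow> 'a list set \<Rightarrow> 'a list \<Rightarrow> bool" where
  "DoO \<sigma> P c \<longleftrightarrow> c \<in># ms_open \<sigma> \<or> (\<exists>z\<in>P. last z = last c \<and> g1 z \<le> g1 c \<and> g2 z \<le> g2 c)"

definition Inv :: "'a ms \<Rightarrow> 'a list set \<Rightarrow> bool" where
  "Inv \<sigma> P \<longleftrightarrow>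
    (\<forall>y. y \<in># ms_open \<sigma> \<or> y \<in> P \<longrightarrow> valid y) \<and>
    (\<forall>z\<in>P. \<forall>y\<in>#ms_open \<sigma>. key z \<le> key y) \<and>
    (\<forall>v. ms_gmin \<sigma> v \<noteq> \<infinity> \<longrightarrow> (\<exists>z\<in>P. last z = v \<and> ms_gmin \<sigma> v = ereal (g2 z))) \<and>
    ereal o1 \<le> ms_f1bar \<sigma> \<and>
    (ms_f2sol \<sigma> \<noteq> \<infinity> \<longrightarrow> (\<exists>x. ms_sol \<sigma> = Some x \<and> valid x \<and>
        ms_f1bar \<sigma> = ereal (g1 x + h1 (last x)) \<and> ms_f2sol \<sigma> = ereal (g2 x + ub2 (last x)) \<and>
        g2 x + ub2 (last x) \<le> W)) \<and>
    DoO \<sigma> P [start] \<and>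
    (\<forall>z\<in>P. \<forall>r. Good z r \<longrightarrow> Reached \<sigma> \<or> (\<exists>w r'. r = last z # w # r' \<and> DoO \<sigma> P (z @ [w]))) \<and>
    (ms_halted \<sigma> \<longrightarrow> (\<forall>y\<in>#ms_open \<sigma>. ereal (fst (key y)) > ms_f1bar \<sigma>))"

lemma valid_ne: "valid y \<Longrightarrow> y \<noteq> []"
  unfolding valid_def is_path_def by simp

lemma valid_lastX: "valid y \<Longrightarrow> last y \<in> X"
  unfolding valid_def using valid_ne[of y] valid_def by auto

lemma opt_real13:
  assumes "valid x" "g2 x + ub2 (last x) \<le> W"
  shows "(o1, o2) \<le> (g1 x + h1 (last x), g2 x + ub2 (last x))"
proof -
  obtain q where q: "is_path E (last x) goal q" "g1 q = h1 (last x)" "g2 q = ub2 (last x)"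
    using real13[OF valid_lastX[OF assms(1)]] by blast
  have P: "is_path E start goal (x @ tl q)"
    using is_path_glue[OF _ q(1)] assms(1) unfolding valid_def by blast
  have ne: "q \<noteq> []" "hd q = last x" using q(1) unfolding is_path_def by auto
  have "g1 (x @ tl q) = g1 x + g1 q" "g2 (x @ tl q) = g2 x + g2 q"
    using pcost_glue[OF valid_ne[OF assms(1)] ne] by auto
  then show ?thesis using opt_min[OF P] q assms(2) by simp
qed

lemma opt_real12:
  assumes "valid x"
  shows "(o1, o2) \<le> (g1 x + ub1 (last x), g2 x + h2 (last x))"
proof -
  have vx: "is_path E start (last x) x" "g2 x + h2 (last x) \<le> W" using assms unfolding valid_def by auto
  obtain q where q: "is_path E (last x) goal q" "g1 q = ub1 (last x)" "g2 q = h2 (last x)"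
    using real12[OF valid_lastX[OF assms(1)] vx] by blast
  have P: "is_path E start goal (x @ tl q)"
    using is_path_glue[OF vx(1) q(1)] .
  have ne: "q \<noteq> []" "hd q = last x" using q(1) unfolding is_path_def by auto
  have "g1 (x @ tl q) = g1 x + g1 q" "g2 (x @ tl q) = g2 x + g2 q"
    using pcost_glue[OF valid_ne[OF assms(1)] ne] by auto
  then show ?thesis using opt_min[OF P] q vx(2) by simp
qed

lemma good_key:
  assumes "Good c r"
  shows "g1 c + h1 (last c) \<le> o1" "g2 c + h2 (last c) \<le> o2"
  using assms low1[of "last c" r] low2[of "last c" r] unfolding Good_def by auto

lemma good_dom:
  assumes "Good c r" "valid z" "last z = last c" "g1 z \<le> g1 c" "g2 z \<le> g2 c"
  shows "Good z r"
proof -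
  have r: "is_path E (last c) goal r" "set r \<subseteq> X" "g1 c + g1 r = o1" "g2 c + g2 r = o2"
    using assms(1) unfolding Good_def by auto
  have P: "is_path E start goal (z @ tl r)"
    using is_path_glue assms(2,3) r(1) unfolding valid_def by metis
  have ne: "r \<noteq> []" "hd r = last z" using r(1) assms(3) unfolding is_path_def by auto
  have cz: "g1 (z @ tl r) = g1 z + g1 r" "g2 (z @ tl r) = g2 z + g2 r"
    using pcost_glue[OF valid_ne[OF assms(2)] ne] by auto
  have "g2 z + g2 r \<le> W" using assms(5) r(4) oW by linarith
  then have "(o1, o2) \<le> (g1 z + g1 r, g2 z + g2 r)" using opt_min[OF P] cz by simp
  then have "g1 z + g1 r = o1 \<and> g2 z + g2 r = o2" using assms(4,5) r(3,4) by auto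
  then show ?thesis using r assms(3) unfolding Good_def by simp
qed

lemma good_child:
  assumes "Good z (last z # w # r')" "valid z"
  shows "Good (z @ [w]) (w # r')"
proof -
  have P: "is_path E (last z) goal (last z # w # r')" and sX: "set (last z # w # r') \<subseteq> X"
    and c: "g1 z + g1 (last z # w # r') = o1" "g2 z + g2 (last z # w # r') = o2"
    using assms(1) unfolding Good_def by auto
  have "is_path E w goal (w # r')" using P by (simp add: is_path_Cons)
  moreover have "g1 (z @ [w]) = g1 z + c1 (last z) w" "g2 (z @ [w]) = g2 z + c2 (last z) w"
    using pcost_snoc[OF valid_ne[OF assms(2)]] by auto
  ultimately show ?thesis using sX c unfolding Good_def by auto
qed

lemma good_start: "Good [start] \<pi>0"
  using opt_ex unfolding Good_def is_path_def by auto

lemma valid_start: "valid [start]"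
proof -
  have "start \<in> X" using opt_ex unfolding is_path_def by (cases \<pi>0) auto
  moreover have "h2 start \<le> o2" using low2[OF opt_ex(1,4)] opt_ex(3) by simp
  ultimately show ?thesis unfolding valid_def using oW by simp
qed

lemma Inv_init: "Inv (ms_init start X F0) {}"
proof -
  have "start \<in> X" using opt_ex unfolding is_path_def by (cases \<pi>0) auto
  then show ?thesis unfolding Inv_def ms_init_def DoO_def using valid_start F0 by auto
qed

lemma key_fst_le: "key z \<le> key y \<Longrightarrow> fst (key z) \<le> fst (key y)"
  by (cases "key z"; cases "key y") auto

end


lemma newF_cases:
  fixes ca cb :: "'a \<Rightarrow> 'a \<Rightarrow> real" and x :: "'a list" and ha ua ub :: "'a \<Rightarrow> real"
    and W :: real and \<sigma> :: "'a ms"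
  defines "fx1 \<equiv> pcost ca x + ha (last x)"
    and "fa \<equiv> pcost ca x + ua (last x)"
    and "fb \<equiv> pcost cb x + ub (last x)"
  obtains (A) "fb \<le> W" "ereal fx1 < ms_f1bar \<sigma> \<or> ereal fb < ms_f2sol \<sigma>"
       "newF ca cb W ha ua ub x \<sigma> = (ereal fx1, ereal fb, Some x)"
  | (B) "\<not> fb \<le> W" "ereal fa < ms_f1bar \<sigma>" "newF ca cb W ha ua ub x \<sigma> = (ereal fa, \<infinity>, ms_sol \<sigma>)"
  | (C) "newF ca cb W ha ua ub x \<sigma> = (ms_f1bar \<sigma>, ms_f2sol \<sigma>, ms_sol \<sigma>)"
        "fb \<le> W \<Longrightarrow> \<not> (ereal fx1 < ms_f1bar \<sigma> \<or> ereal fb < ms_f2sol \<sigma>)"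
        "\<not> fb \<le> W \<Longrightarrow> \<not> ereal fa < ms_f1bar \<sigma>"
  unfolding fx1_def fa_def fb_def newF_def Let_def
  by (cases "pcost cb x + ub (last x) \<le> W") (auto split: if_splits)

context mscorr
begin

lemma fst_key: "fst (key y) = g1 y + h1 (last y)"
  by (simp add: mkey_def)

lemma key_le_of: "g1 a + h1 (last a) \<le> g1 b + h1 (last b) \<Longrightarrow> g2 a + h2 (last a) \<le> g2 b + h2 (last b)
  \<Longrightarrow> key a \<le> key b"
  unfolding mkey_def by (rule lex_of_le)

lemma Inv_empty:
  assumes "Inv \<sigma> P" "ms_open \<sigma> = {#}"
  shows "Inv (\<sigma>\<lparr>ms_halted := True\<rparr>) P"
  using assms unfolding Inv_def DoO_def Reached_def by simp

lemma DoO_remove: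
  assumes "DoO \<sigma> P c" "Good c r" "ereal (fst (key x)) > ms_f1bar \<sigma>" "ereal o1 \<le> ms_f1bar \<sigma>"
    and "ms_open \<sigma>' = ms_open \<sigma> - {#x#}"
  shows "DoO \<sigma>' P c"
proof -
  have "g1 c + h1 (last c) \<le> o1" using good_key(1)[OF assms(2)] .
  then have "ereal (fst (key c)) \<le> ms_f1bar \<sigma>" using assms(4) unfolding fst_key
    by (meson ereal_less_eq(3) order_trans)
  then have "c \<noteq> x" using assms(3) by auto
  then show ?thesis using assms(1,5) mem_diff_single unfolding DoO_def by metis
qed

lemma Inv_stop:
  assumes I: "Inv \<sigma> P" and x: "x \<in># ms_open \<sigma>" and mn: "\<forall>y\<in>#ms_open \<sigma>. key x \<le> key y"
    and gt: "ereal (fst (key x)) > ms_f1bar \<sigma>"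
  shows "Inv (\<sigma>\<lparr>ms_open := ms_open \<sigma> - {#x#}, ms_halted := True\<rparr>) P"
proof -
  let ?\<sigma> = "\<sigma>\<lparr>ms_open := ms_open \<sigma> - {#x#}, ms_halted := True\<rparr>"
  have f1: "ereal o1 \<le> ms_f1bar \<sigma>" using I unfolding Inv_def by blast
  have V: "\<forall>y. y \<in># ms_open ?\<sigma> \<or> y \<in> P \<longrightarrow> valid y" using I unfolding Inv_def by (auto dest: in_diffD)
  have M: "\<forall>z\<in>P. \<forall>y\<in>#ms_open ?\<sigma>. key z \<le> key y" using I unfolding Inv_def by (auto dest: in_diffD)
  have D: "DoO ?\<sigma> P [start]"
    using DoO_remove[OF _ good_start gt f1] I unfolding Inv_def by simp
  have PR: "Reached ?\<sigma> \<or> (\<exists>w r'. r = last z # w # r' \<and> DoO ?\<sigma> P (z @ [w]))"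
    if "z \<in> P" "Good z r" for z r
  proof -
    have "Reached \<sigma> \<or> (\<exists>w r'. r = last z # w # r' \<and> DoO \<sigma> P (z @ [w]))"
      using I that unfolding Inv_def by blast
    then show ?thesis
    proof
      assume "Reached \<sigma>" then show ?thesis unfolding Reached_def by simp
    next
      assume "\<exists>w r'. r = last z # w # r' \<and> DoO \<sigma> P (z @ [w])"
      then obtain w r' where wr: "r = last z # w # r'" "DoO \<sigma> P (z @ [w])" by blast
      have "valid z" using I that unfolding Inv_def by blast
      then have "Good (z @ [w]) (w # r')" using good_child that(2) wr(1) by simp
      then show ?thesis using DoO_remove[OF wr(2) _ gt f1] wr(1) by simp
    qed
  qed
  have H: "\<forall>y\<in>#ms_open ?\<sigma>. ereal (fst (key y)) > ms_f1bar ?\<sigma>"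
  proof
    fix y assume "y \<in># ms_open ?\<sigma>"
    then have "key x \<le> key y" using mn by (auto dest: in_diffD)
    then have "fst (key x) \<le> fst (key y)" by (rule key_fst_le)
    then show "ereal (fst (key y)) > ms_f1bar ?\<sigma>" using gt by (simp add: less_le_trans)
  qed
  show ?thesis using I V M D PR H unfolding Inv_def by simp
qed

lemma DoO_discard:
  assumes I: "Inv \<sigma> P" and x: "x \<in># ms_open \<sigma>" and ge: "ereal (g2 x) \<ge> ms_gmin \<sigma> (last x)"
    and D: "DoO \<sigma> P c"
  shows "DoO (\<sigma>\<lparr>ms_open := ms_open \<sigma> - {#x#}\<rparr>) P c"
proof (cases "c = x")
  case True
  have "ms_gmin \<sigma> (last x) \<noteq> \<infinity>" using ge by auto
  then obtain z where z: "z \<in> P" "last z = last x" "ms_gmin \<sigma> (last x) = ereal (g2 z)"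
    using I unfolding Inv_def by blast
  have "g2 z \<le> g2 x" using ge z(3) by simp
  moreover have "key z \<le> key x" using I z(1) x unfolding Inv_def by blast
  then have "g1 z \<le> g1 x" using key_fst_le z(2) unfolding fst_key by force
  ultimately show ?thesis unfolding DoO_def using True z by auto
next
  case False
  then show ?thesis using D mem_diff_single unfolding DoO_def by force
qed

lemma Inv_discard:
  assumes I: "Inv \<sigma> P" and nh: "\<not> ms_halted \<sigma>" and x: "x \<in># ms_open \<sigma>"
    and ge: "ereal (g2 x) \<ge> ms_gmin \<sigma> (last x)"
  shows "Inv (\<sigma>\<lparr>ms_open := ms_open \<sigma> - {#x#}\<rparr>) P"
proof -
  let ?\<sigma> = "\<sigma>\<lparr>ms_open := ms_open \<sigma> - {#x#}\<rparr>"
  have V: "\<forall>y. y \<in># ms_open ?\<sigma> \<or> y \<in> P \<longrightarrow> valid y" using I unfolding Inv_def by (auto dest: in_diffD)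
  have M: "\<forall>z\<in>P. \<forall>y\<in>#ms_open ?\<sigma>. key z \<le> key y" using I unfolding Inv_def by (auto dest: in_diffD)
  have D: "DoO ?\<sigma> P [start]" using DoO_discard[OF I x ge] I unfolding Inv_def by blast
  have PR: "Reached ?\<sigma> \<or> (\<exists>w r'. r = last z # w # r' \<and> DoO ?\<sigma> P (z @ [w]))"
    if "z \<in> P" "Good z r" for z r
  proof -
    have "Reached \<sigma> \<or> (\<exists>w r'. r = last z # w # r' \<and> DoO \<sigma> P (z @ [w]))"
      using I that unfolding Inv_def by blast
    then show ?thesis using DoO_discard[OF I x ge] unfolding Reached_def by auto
  qed
  show ?thesis using I V M D PR nh unfolding Inv_def by simp
qed

end


context mscorr
begin

lemma Inv_process:
  assumes I: "Inv \<sigma> P" and nh: "\<not> ms_halted \<sigma>" and x: "x \<in># ms_open \<sigma>"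
    and mn: "\<forall>y\<in>#ms_open \<sigma>. key x \<le> key y"
    and nf: "\<not> ereal (fst (key x)) > ms_f1bar \<sigma>"
    and lt: "\<not> ereal (g2 x) \<ge> ms_gmin \<sigma> (last x)"
  shows "Inv (ms_process E c1 c2 W X h1 h2 ub1 ub2 x \<sigma>) (insert x P)"
proof -
  define \<sigma>' where "\<sigma>' = ms_process E c1 c2 W X h1 h2 ub1 ub2 x \<sigma>"
  define u where "u = last x"
  define NF where "NF = newF c1 c2 W h1 ub1 ub2 x \<sigma>"
  define gm where "gm = (ms_gmin \<sigma>)(last x := ereal (g2 x))"
  define C where "C = childset E c1 c2 W X h1 h2 gm (fst NF) x"
  have f_h: "ms_halted \<sigma>' = ms_halted \<sigma>" unfolding \<sigma>'_def by (rule ms_process_fields)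
  have f_gm: "ms_gmin \<sigma>' = gm" unfolding \<sigma>'_def gm_def by (rule ms_process_fields)
  have f_1: "ms_f1bar \<sigma>' = fst NF" unfolding \<sigma>'_def NF_def by (rule ms_process_fields)
  have f_2: "ms_f2sol \<sigma>' = fst (snd NF)" unfolding \<sigma>'_def NF_def by (rule ms_process_fields)
  have f_s: "ms_sol \<sigma>' = snd (snd NF)" unfolding \<sigma>'_def NF_def by (rule ms_process_fields)
  have f_o: "ms_open \<sigma>' = (ms_open \<sigma> - {#x#}) + (if h1 u = ub1 u then {#} else mset_set C)"
    unfolding \<sigma>'_def C_def gm_def NF_def u_def by (rule ms_process_fields)
  have finC: "finite C" unfolding C_def by (rule finite_childset[OF finE])
  have vx: "valid x" using I x unfolding Inv_def by blast
  have xne: "x \<noteq> []" using valid_ne[OF vx] .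
  have uX: "u \<in> X" using valid_lastX[OF vx] unfolding u_def .
  have xpath: "is_path E start u x" and xW: "g2 x + h2 u \<le> W" using vx unfolding valid_def u_def by auto
  have f1o: "ereal o1 \<le> ms_f1bar \<sigma>" using I unfolding Inv_def by blast
  have nf': "ereal (g1 x + h1 u) \<le> ms_f1bar \<sigma>" using nf unfolding fst_key u_def by (simp add: not_less)
  have open_old: "y \<in># ms_open \<sigma>'" if "y \<in># ms_open \<sigma>" "y \<noteq> x" for y
    using f_o mem_diff_single[OF that] by simp
  have open_C: "y \<in># ms_open \<sigma>'" if "y \<in> C" "h1 u \<noteq> ub1 u" for y
    using f_o that finC by simp
  have open_cases: "(y \<in># ms_open \<sigma> \<and> y \<noteq> x) \<or> y = x \<or> y \<in> C" if "y \<in># ms_open \<sigma>'" for y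
    using that f_o finC by (auto split: if_splits dest: in_diffD)

  have NF1: "ereal o1 \<le> fst NF"
  proof (cases rule: newF_cases[where ca=c1 and cb=c2 and x=x and ha=h1 and ua=ub1 and ub=ub2 and W=W and \<sigma>=\<sigma>])
    case A
    then have "(o1, o2) \<le> (g1 x + h1 (last x), g2 x + ub2 (last x))" using opt_real13[OF vx] by simp
    then show ?thesis using A unfolding NF_def by auto
  next
    case B
    then have "(o1, o2) \<le> (g1 x + ub1 (last x), g2 x + h2 (last x))" using opt_real12[OF vx] by simp
    then show ?thesis using B unfolding NF_def by auto
  next
    case C
    then show ?thesis using f1o unfolding NF_def by simp
  qed
  have SOL: "\<exists>y. snd (snd NF) = Some y \<and> valid y \<and> fst NF = ereal (g1 y + h1 (last y)) \<and>
     fst (snd NF) = ereal (g2 y + ub2 (last y)) \<and> g2 y + ub2 (last y) \<le> W" if "fst (snd NF) \<noteq> \<infinity>"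
  proof (cases rule: newF_cases[where ca=c1 and cb=c2 and x=x and ha=h1 and ua=ub1 and ub=ub2 and W=W and \<sigma>=\<sigma>])
    case A
    then show ?thesis using vx unfolding NF_def by auto
  next
    case B
    then show ?thesis using that unfolding NF_def by simp
  next
    case C
    then show ?thesis using that I unfolding NF_def Inv_def by simp
  qed
  have REACH: "Reached \<sigma>'" if R: "Reached \<sigma>"
  proof -
    have R': "ms_f1bar \<sigma> = ereal o1" "ms_f2sol \<sigma> = ereal o2" using R unfolding Reached_def by auto
    show ?thesis
    proof (cases rule: newF_cases[where ca=c1 and cb=c2 and x=x and ha=h1 and ua=ub1 and ub=ub2 and W=W and \<sigma>=\<sigma>])
      case A
      have le: "(o1, o2) \<le> (g1 x + h1 (last x), g2 x + ub2 (last x))" using opt_real13[OF vx] A by simp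
      have "g1 x + h1 (last x) \<le> o1" using nf' R' unfolding u_def by simp
      then show ?thesis using A(2) le R' by auto
    next
      case B
      have "(o1, o2) \<le> (g1 x + ub1 (last x), g2 x + h2 (last x))" using opt_real12[OF vx] by simp
      then show ?thesis using B(2) R' by auto
    next
      case C
      then show ?thesis using R' unfolding Reached_def f_1 f_2 NF_def by simp
    qed
  qed
  have DoO_lift: "DoO \<sigma>' (insert x P) c" if "DoO \<sigma> P c" for c
  proof -
    from that consider "c \<in># ms_open \<sigma>" | "\<exists>z\<in>P. last z = last c \<and> g1 z \<le> g1 c \<and> g2 z \<le> g2 c"
      unfolding DoO_def by blast
    then show ?thesis
    proof cases
      case 1
      then show ?thesis unfolding DoO_def using open_old by (cases "c = x") auto
    next
      case 2
      then show ?thesis unfolding DoO_def by blast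
    qed
  qed
  have validC: "valid y" if yC: "y \<in> C" for y
  proof -
    obtain v where yv: "y = x @ [v]" "(u, v) \<in> E" "v \<in> X"
      and w: "\<not> (g2 x + c2 u v + h2 v > W)"
      using yC unfolding C_def childset_def u_def by blast
    have "is_path E start v y" using is_path_snoc[OF xpath yv(2)] yv(1) by simp
    moreover have "g2 y = g2 x + c2 u v" using pcost_snoc[OF xne] yv(1) unfolding u_def by simp
    ultimately show ?thesis unfolding valid_def using yv w vx unfolding valid_def by auto
  qed
  have keyC: "key x \<le> key y" if yC: "y \<in> C" for y
  proof -
    obtain v where yv: "y = x @ [v]" "(u, v) \<in> E" "v \<in> X"
      using yC unfolding C_def childset_def u_def by blast
    have g: "g1 y = g1 x + c1 u v" "g2 y = g2 x + c2 u v"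
      using pcost_snoc[OF xne] yv(1) unfolding u_def by auto
    show ?thesis using cons1[OF uX yv(3,2)] cons2[OF uX yv(3,2)] g yv(1) unfolding u_def
      by (intro key_le_of) auto
  qed
  have V: "\<forall>y. y \<in># ms_open \<sigma>' \<or> y \<in> insert x P \<longrightarrow> valid y"
  proof (intro allI impI)
    fix y assume "y \<in># ms_open \<sigma>' \<or> y \<in> insert x P"
    then show "valid y"
    proof
      assume "y \<in># ms_open \<sigma>'"
      then show ?thesis using open_cases validC I vx unfolding Inv_def by blast
    next
      assume "y \<in> insert x P" then show ?thesis using vx I unfolding Inv_def by blast
    qed
  qed
  have M: "\<forall>z\<in>insert x P. \<forall>y\<in>#ms_open \<sigma>'. key z \<le> key y"
  proof (intro ballI)
    fix z y assume z: "z \<in> insert x P" and y: "y \<in># ms_open \<sigma>'"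
    have zx: "key z \<le> key x" using z I x unfolding Inv_def by auto
    from open_cases[OF y] show "key z \<le> key y"
    proof (elim disjE conjE)
      assume "y \<in># ms_open \<sigma>" "y \<noteq> x"
      then show ?thesis using z I mn unfolding Inv_def by auto
    next
      assume "y = x" then show ?thesis using zx by simp
    next
      assume "y \<in> C" then show ?thesis using zx keyC by (meson order_trans)
    qed
  qed
  have G: "\<forall>v. ms_gmin \<sigma>' v \<noteq> \<infinity> \<longrightarrow> (\<exists>z\<in>insert x P. last z = v \<and> ms_gmin \<sigma>' v = ereal (g2 z))"
    using I unfolding f_gm gm_def Inv_def by auto
  have D: "DoO \<sigma>' (insert x P) [start]" using DoO_lift I unfolding Inv_def by blast
  have PRold: "Reached \<sigma>' \<or> (\<exists>w r'. r = last z # w # r' \<and> DoO \<sigma>' (insert x P) (z @ [w]))"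
    if "z \<in> P" "Good z r" for z r
  proof -
    have "Reached \<sigma> \<or> (\<exists>w r'. r = last z # w # r' \<and> DoO \<sigma> P (z @ [w]))"
      using I that unfolding Inv_def by blast
    then show ?thesis using REACH DoO_lift by blast
  qed
  have PRx: "Reached \<sigma>' \<or> (\<exists>w r'. r = last x # w # r' \<and> DoO \<sigma>' (insert x P) (x @ [w]))"
    if gx: "Good x r" for r
  proof -
    have r: "is_path E u goal r" "set r \<subseteq> X" "g1 x + g1 r = o1" "g2 x + g2 r = o2"
      using gx unfolding Good_def u_def by auto
    have l1: "h1 u \<le> g1 r" using low1[OF r(1,2)] .
    have l2: "h2 u \<le> g2 r" using low2[OF r(1,2)] .
    show ?thesis
    proof (cases "h1 u = ub1 u")
      case True
      have "ub2 u \<le> h2 u" using ubh[OF uX xpath xW True] .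
      then have fbW: "g2 x + ub2 u \<le> W" and fbo: "g2 x + ub2 u \<le> o2" using xW l2 r(4) by auto
      have fxo: "g1 x + h1 u \<le> o1" using l1 r(3) by simp
      have le: "(o1, o2) \<le> (g1 x + h1 u, g2 x + ub2 u)" using opt_real13[OF vx] fbW unfolding u_def by simp
      have eq: "g1 x + h1 u = o1" "g2 x + ub2 u = o2" using le fxo fbo by auto
      have "Reached \<sigma>'"
      proof (cases rule: newF_cases[where ca=c1 and cb=c2 and x=x and ha=h1 and ua=ub1 and ub=ub2 and W=W and \<sigma>=\<sigma>])
        case A
        then show ?thesis using eq unfolding Reached_def f_1 f_2 NF_def u_def by simp
      next
        case B
        then show ?thesis using fbW unfolding u_def by simp
      next
        case C
        have nc: "\<not> (ereal o1 < ms_f1bar \<sigma> \<or> ereal o2 < ms_f2sol \<sigma>)"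
          using C(2) fbW eq unfolding u_def by simp
        then have f1e: "ms_f1bar \<sigma> = ereal o1" using f1o by auto
        have f2le: "ms_f2sol \<sigma> \<le> ereal o2" using nc by auto
        then have "ms_f2sol \<sigma> \<noteq> \<infinity>" by auto
        then obtain y where y: "valid y" "ms_f1bar \<sigma> = ereal (g1 y + h1 (last y))"
          "ms_f2sol \<sigma> = ereal (g2 y + ub2 (last y))" "g2 y + ub2 (last y) \<le> W"
          using I unfolding Inv_def by blast
        have "(o1, o2) \<le> (g1 y + h1 (last y), g2 y + ub2 (last y))" using opt_real13[OF y(1,4)] .
        moreover have "g1 y + h1 (last y) = o1" using y(2) f1e by simp
        ultimately have "o2 \<le> g2 y + ub2 (last y)" by auto
        then have "ms_f2sol \<sigma> = ereal o2" using f2le y(3) by simp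
        then show ?thesis using f1e C(1) unfolding Reached_def f_1 f_2 NF_def by simp
      qed
      then show ?thesis by blast
    next
      case False
      have ug: "u \<noteq> goal" using False goalh by auto
      obtain r1 where r1: "r = u # r1" using r(1) unfolding is_path_def by (cases r) auto
      have "r1 \<noteq> []" using r(1) r1 ug unfolding is_path_def by auto
      then obtain w r' where wr: "r1 = w # r'" by (cases r1) auto
      have e: "(u, w) \<in> E" and P': "is_path E w goal (w # r')" using r(1) r1 wr by (auto simp: is_path_Cons)
      have wX: "w \<in> X" using r(2) r1 wr by auto
      have s'X: "set (w # r') \<subseteq> X" using r(2) r1 wr by auto
      have gr: "g1 r = c1 u w + g1 (w # r')" "g2 r = c2 u w + g2 (w # r')" using r1 wr by auto
      have lw1: "h1 w \<le> g1 (w # r')" using low1[OF P' s'X] .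
      have lw2: "h2 w \<le> g2 (w # r')" using low2[OF P' s'X] .
      define c where "c = x @ [w]"
      have gc: "g1 c = g1 x + c1 u w" "g2 c = g2 x + c2 u w"
        using pcost_snoc[OF xne] unfolding c_def u_def by auto
      have nn: "c1 u w \<ge> 0" "c2 u w \<ge> 0" using nn1 nn2 e unfolding nonneg_def by auto
      have chk1: "\<not> (ereal (g1 x + c1 u w + h1 w) > fst NF)"
      proof -
        have "g1 x + c1 u w + h1 w \<le> o1" using lw1 gr r(3) by simp
        then have "ereal (g1 x + c1 u w + h1 w) \<le> ereal o1" by simp
        then have "ereal (g1 x + c1 u w + h1 w) \<le> fst NF" using NF1 by (rule order_trans)
        then show ?thesis by (simp add: not_less)
      qed
      have chk2: "\<not> (g2 x + c2 u w + h2 w > W)" using lw2 gr r(4) oW by simp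
      have "DoO \<sigma>' (insert x P) c"
      proof (cases "ereal (g2 x + c2 u w) \<ge> gm w")
        case False
        then have "c \<in> C" unfolding C_def childset_def c_def using e wX chk1 chk2 unfolding u_def by blast
        then show ?thesis unfolding DoO_def using open_C \<open>h1 u \<noteq> ub1 u\<close> by blast
      next
        case ge: True
        show ?thesis
        proof (cases "w = u")
          case True
          then show ?thesis unfolding DoO_def c_def u_def using gc nn unfolding c_def u_def by auto
        next
          case False
          then have gmw: "ms_gmin \<sigma> w \<le> ereal (g2 c)" using ge gc unfolding gm_def u_def by simp
          then have "ms_gmin \<sigma> w \<noteq> \<infinity>" by auto
          then obtain z where z: "z \<in> P" "last z = w" "ms_gmin \<sigma> w = ereal (g2 z)"
            using I unfolding Inv_def by blast
          have g2z: "g2 z \<le> g2 c" using gmw z(3) by simp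
          have "key z \<le> key x" using I z(1) x unfolding Inv_def by blast
          moreover have "key x \<le> key c"
            using cons1[OF uX wX e] cons2[OF uX wX e] gc unfolding c_def u_def
            by (intro key_le_of) auto
          ultimately have "key z \<le> key c" by (rule order_trans)
          then have "g1 z + h1 w \<le> g1 c + h1 w" using key_fst_le z(2) unfolding fst_key c_def by force
          then show ?thesis unfolding DoO_def using z g2z unfolding c_def by auto
        qed
      qed
      then show ?thesis using r1 wr unfolding c_def u_def by blast
    qed
  qed
  have PR: "\<forall>z\<in>insert x P. \<forall>r. Good z r \<longrightarrow> Reached \<sigma>' \<or>
       (\<exists>w r'. r = last z # w # r' \<and> DoO \<sigma>' (insert x P) (z @ [w]))"
    using PRold PRx by blast
  have F: "ereal o1 \<le> ms_f1bar \<sigma>'" using NF1 f_1 by simp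
  have S: "ms_f2sol \<sigma>' \<noteq> \<infinity> \<longrightarrow> (\<exists>y. ms_sol \<sigma>' = Some y \<and> valid y \<and>
        ms_f1bar \<sigma>' = ereal (g1 y + h1 (last y)) \<and> ms_f2sol \<sigma>' = ereal (g2 y + ub2 (last y)) \<and>
        g2 y + ub2 (last y) \<le> W)" using SOL unfolding f_1 f_2 f_s by blast
  have H: "\<not> ms_halted \<sigma>'" using f_h nh by simp
  show ?thesis unfolding \<sigma>'_def[symmetric] Inv_def using V M G F S D PR H by blast
qed

end


context mscorr
begin

lemma Inv_step:
  assumes "Inv \<sigma> P" "mstep \<sigma> \<sigma>'"
  shows "\<exists>P'. Inv \<sigma>' P'"
  using assms(2)
proof cases
  case empty then show ?thesis using Inv_empty[OF assms(1)] by blast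
next
  case (stop x) then show ?thesis using Inv_stop[OF assms(1)] by blast
next
  case (discard x) then show ?thesis using Inv_discard[OF assms(1)] by blast
next
  case (process x) then show ?thesis using Inv_process[OF assms(1)] by blast
qed

lemma reach_Inv: "mstep\<^sup>*\<^sup>* (ms_init start X F0) \<sigma> \<Longrightarrow> \<exists>P. Inv \<sigma> P"
proof (induction rule: rtranclp_induct)
  case base then show ?case using Inv_init by blast
next
  case (step \<sigma> \<sigma>') then show ?case using Inv_step by blast
qed

lemma ms_correct:
  assumes R: "mstep\<^sup>*\<^sup>* (ms_init start X F0) \<sigma>" and H: "ms_halted \<sigma>"
  shows "\<exists>x. ms_sol \<sigma> = Some x \<and> valid x \<and> g1 x + h1 (last x) = o1 \<and> g2 x + ub2 (last x) = o2"
proof -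
  obtain P where I: "Inv \<sigma> P" using reach_Inv[OF R] by blast
  have f1o: "ereal o1 \<le> ms_f1bar \<sigma>" using I unfolding Inv_def by blast
  have RE: "Reached \<sigma>"
  proof (rule ccontr)
    assume nR: "\<not> Reached \<sigma>"
    have open_no: "False" if "y \<in># ms_open \<sigma>" "Good y r" for y r
    proof -
      have "ereal (fst (key y)) > ms_f1bar \<sigma>" using I H that(1) unfolding Inv_def by blast
      moreover have "fst (key y) \<le> o1" using good_key(1)[OF that(2)] unfolding fst_key .
      ultimately show False using f1o by (meson ereal_less_eq(3) leD order_trans)
    qed
    have main: "\<And>y r. length r = n \<Longrightarrow> (y \<in># ms_open \<sigma> \<or> y \<in> P) \<Longrightarrow> Good y r \<Longrightarrow> False" for n
    proof (induction n rule: less_induct)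
      case (less n y r)
      from less.prems(2) show False
      proof
        assume "y \<in># ms_open \<sigma>" then show False using open_no less.prems(3) by blast
      next
        assume yP: "y \<in> P"
        then obtain w r' where wr: "r = last y # w # r'" "DoO \<sigma> P (y @ [w])"
          using I nR less.prems(3) unfolding Inv_def by blast
        have vy: "valid y" using I yP unfolding Inv_def by blast
        have G: "Good (y @ [w]) (w # r')" using good_child less.prems(3) wr(1) vy by simp
        have len: "length (w # r') < n" using less.prems(1) wr(1) by simp
        from wr(2) show False unfolding DoO_def
        proof (elim disjE bexE conjE)
          assume "y @ [w] \<in># ms_open \<sigma>"
          then show False using less.IH[OF len refl _ G] by blast
        next
          fix z assume z: "z \<in> P" "last z = last (y @ [w])" "g1 z \<le> g1 (y @ [w])" "g2 z \<le> g2 (y @ [w])"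
          have "valid z" using I z(1) unfolding Inv_def by blast
          then have "Good z (w # r')" using good_dom[OF G _ z(2-4)] by simp
          then show False using less.IH[OF len refl _] z(1) by blast
        qed
      qed
    qed
    have "DoO \<sigma> P [start]" using I unfolding Inv_def by blast
    then show False unfolding DoO_def
    proof (elim disjE bexE conjE)
      assume "[start] \<in># ms_open \<sigma>"
      then show False using main[OF refl _ good_start] by blast
    next
      fix z assume z: "z \<in> P" "last z = last [start]" "g1 z \<le> g1 [start]" "g2 z \<le> g2 [start]"
      have "valid z" using I z(1) unfolding Inv_def by blast
      then have "Good z \<pi>0" using good_dom[OF good_start _ z(2-4)] by simp
      then show False using main[OF refl] z(1) by blast
    qed
  qed
  then have "ms_f2sol \<sigma> \<noteq> \<infinity>" unfolding Reached_def by simp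
  then obtain x where x: "ms_sol \<sigma> = Some x" "valid x" "ms_f1bar \<sigma> = ereal (g1 x + h1 (last x))"
    "ms_f2sol \<sigma> = ereal (g2 x + ub2 (last x))"
    using I unfolding Inv_def by blast
  then show ?thesis using RE unfolding Reached_def by auto
qed

end


lemma is_path_take:
  assumes "is_path E u v \<rho>" "k < length \<rho>"
  shows "is_path E u (\<rho> ! k) (take (Suc k) \<rho>)"
proof -
  have ne: "take (Suc k) \<rho> \<noteq> []" "\<rho> \<noteq> []" using assms unfolding is_path_def by auto
  have "hd (take (Suc k) \<rho>) = hd \<rho>" using ne(2) by (cases \<rho>) auto
  moreover have "last (take (Suc k) \<rho>) = \<rho> ! k" using assms(2) by (simp add: take_Suc_conv_app_nth)
  ultimately show ?thesis using assms ne unfolding is_path_def by (simp add: successively_take)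
qed

context bsloc
begin

lemma cover_prefix:
  assumes R: "step\<^sup>*\<^sup>* (bs_init goal A) \<sigma>" and H: "bs_halted \<sigma>"
    and adm: "admissible E p start h"
    and x: "is_path E start u x" and P: "is_path E u goal \<rho>" and sA: "set \<rho> \<subseteq> A"
    and le: "ereal (pcost p x + pcost p \<rho>) \<le> B"
  shows "set \<rho> \<subseteq> bs_expanded \<sigma>"
proof (rule cover_set[OF R H P sA], intro allI impI)
  fix k assume k: "k < length \<rho>"
  have Pk: "is_path E u (\<rho> ! k) (take (Suc k) \<rho>)" using is_path_take[OF P k] .
  have "is_path E start (\<rho> ! k) (x @ tl (take (Suc k) \<rho>))" using is_path_glue[OF x Pk] .
  then have "h (\<rho> ! k) \<le> pcost p (x @ tl (take (Suc k) \<rho>))" using adm unfolding admissible_def by blast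
  moreover have "pcost p (x @ tl (take (Suc k) \<rho>)) = pcost p x + pcost p (take (Suc k) \<rho>)"
    using x Pk unfolding is_path_def by (intro pcost_glue) auto
  moreover have "pcost p \<rho> = pcost p (take (Suc k) \<rho>) + pcost p (drop k \<rho>)" using pcost_take_drop[OF k] .
  ultimately have "pcost p (drop k \<rho>) + h (\<rho> ! k) \<le> pcost p x + pcost p \<rho>" by linarith
  then have "ereal (pcost p (drop k \<rho>) + h (\<rho> ! k)) \<le> ereal (pcost p x + pcost p \<rho>)" by simp
  then show "ereal (pcost p (drop k \<rho>) + h (\<rho> ! k)) \<le> B" using le by (rule order_trans)
qed

end

lemma bdd_below_pcost:
  assumes "nonneg E c"
  shows "bdd_below {pcost c p | p. is_path E u goal p \<and> Q p}"
  using pcost_nonneg[OF assms] unfolding is_path_def bdd_below_def by blast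

lemma h2v_le:
  assumes "nonneg E c2" "is_path E u goal r"
  shows "h2v E c2 goal u \<le> pcost c2 r"
  unfolding h2v_def using bdd_below_pcost[OF assms(1), of u goal "\<lambda>_. True"] assms(2)
  by (intro cInf_lower) auto

lemma h1v_le:
  assumes "nonneg E c1" "is_path E u goal r" "set r \<subseteq> Y"
  shows "h1v E c1 goal Y u \<le> pcost c1 r"
  unfolding h1v_def using bdd_below_pcost[OF assms(1), of u goal "\<lambda>p. set p \<subseteq> Y"] assms(2,3)
  by (intro cInf_lower) auto

lemma ub2v_le:
  assumes "nonneg E c2" "is_path E u goal r" "set r \<subseteq> Y" "pcost c1 r = h1v E c1 goal Y u"
  shows "ub2v E c1 c2 goal Y u \<le> pcost c2 r"
  unfolding ub2v_def
  using bdd_below_pcost[OF assms(1), of u goal "\<lambda>p. set p \<subseteq> Y \<and> pcost c1 p = h1v E c1 goal Y u"] assms(2-4)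
  by (intro cInf_lower) auto

lemma lexmin21:
  assumes "finite S" "E \<subseteq> S \<times> S" "nonneg E c1" "nonneg E c2" "is_path E u goal p1"
  shows "\<exists>q0. is_path E u goal q0 \<and> h2v E c2 goal u = pcost c2 q0 \<and> ub1v E c1 c2 goal u = pcost c1 q0"
proof -
  obtain q0 where q0: "is_path E u goal q0"
    "\<forall>p. is_path E u goal p \<longrightarrow> (pcost c2 q0, pcost c1 q0) \<le> (pcost c2 p, pcost c1 p)"
    using path_lexmin[OF assms(1,2,4,3), of "is_path E u goal" u goal p1] assms(5) by blast
  have h: "h2v E c2 goal u = pcost c2 q0" unfolding h2v_def
  proof (rule cInf_eq_minimum)
    show "pcost c2 q0 \<in> {pcost c2 p | p. is_path E u goal p}" using q0(1) by blast
  next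
    fix y assume "y \<in> {pcost c2 p | p. is_path E u goal p}"
    then obtain p where "y = pcost c2 p" "is_path E u goal p" by blast
    then show "pcost c2 q0 \<le> y" using q0(2) by fastforce
  qed
  have "ub1v E c1 c2 goal u = pcost c1 q0" unfolding ub1v_def
  proof (rule cInf_eq_minimum)
    show "pcost c1 q0 \<in> {pcost c1 p | p. is_path E u goal p \<and> pcost c2 p = h2v E c2 goal u}"
      using q0(1) h by force
  next
    fix y assume "y \<in> {pcost c1 p | p. is_path E u goal p \<and> pcost c2 p = h2v E c2 goal u}"
    then obtain p where "y = pcost c1 p" "is_path E u goal p" "pcost c2 p = pcost c2 q0"
      using h by auto
    then show "pcost c1 q0 \<le> y" using q0(2) by fastforce
  qed
  then show ?thesis using q0(1) h by blast
qed

lemma lexmin12: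
  assumes "finite S" "E \<subseteq> S \<times> S" "nonneg E c1" "nonneg E c2" "is_path E u goal p1" "set p1 \<subseteq> Y"
  shows "\<exists>q1. is_path E u goal q1 \<and> set q1 \<subseteq> Y \<and> h1v E c1 goal Y u = pcost c1 q1 \<and>
     ub2v E c1 c2 goal Y u = pcost c2 q1"
proof -
  obtain q1 where q1: "is_path E u goal q1 \<and> set q1 \<subseteq> Y"
    "\<forall>p. is_path E u goal p \<and> set p \<subseteq> Y \<longrightarrow> (pcost c1 q1, pcost c2 q1) \<le> (pcost c1 p, pcost c2 p)"
    using path_lexmin[OF assms(1,2,3,4), of "\<lambda>p. is_path E u goal p \<and> set p \<subseteq> Y" u goal p1] assms(5,6)
    by blast
  have h: "h1v E c1 goal Y u = pcost c1 q1" unfolding h1v_def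
  proof (rule cInf_eq_minimum)
    show "pcost c1 q1 \<in> {pcost c1 p | p. is_path E u goal p \<and> set p \<subseteq> Y}" using q1(1) by blast
  next
    fix y assume "y \<in> {pcost c1 p | p. is_path E u goal p \<and> set p \<subseteq> Y}"
    then obtain p where "y = pcost c1 p" "is_path E u goal p" "set p \<subseteq> Y" by blast
    then show "pcost c1 q1 \<le> y" using q1(2) by fastforce
  qed
  have "ub2v E c1 c2 goal Y u = pcost c2 q1" unfolding ub2v_def
  proof (rule cInf_eq_minimum)
    show "pcost c2 q1 \<in> {pcost c2 p | p. is_path E u goal p \<and> set p \<subseteq> Y \<and> pcost c1 p = h1v E c1 goal Y u}"
      using q1(1) h by force
  next
    fix y assume "y \<in> {pcost c2 p | p. is_path E u goal p \<and> set p \<subseteq> Y \<and> pcost c1 p = h1v E c1 goal Y u}"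
    then obtain p where "y = pcost c2 p" "is_path E u goal p" "set p \<subseteq> Y" "pcost c1 p = pcost c1 q1"
      using h by auto
    then show "pcost c2 q1 \<le> y" using q1(2) by fastforce
  qed
  then show ?thesis using q1(1) h by blast
qed


theorem theorem3:
  fixes S :: "'a set" and E :: "('a \<times> 'a) set" and c1 c2 :: "'a \<Rightarrow> 'a \<Rightarrow> real"
    and start goal :: 'a and W :: real and hb1 hb2 :: "'a \<Rightarrow> real"
  assumes "finite S" and "E \<subseteq> S \<times> S" and "start \<in> S" and "goal \<in> S"
    and "\<forall>(u, v) \<in> E. c1 u v \<ge> 0 \<and> c2 u v \<ge> 0"
    and "admissible E c2 start hb2" and "admissible E c1 start hb1"
    and "\<exists>\<pi>. is_path E start goal \<pi> \<and> pcost c2 \<pi> \<le> W"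
  shows
    "run_terminates (bs_step E c2 c1 hb2 UNIV (ereal W)) bs_halted (bs_init goal UNIV) \<and>
     (\<forall>\<sigma>1. (bs_step E c2 c1 hb2 UNIV (ereal W))\<^sup>*\<^sup>* (bs_init goal UNIV) \<sigma>1 \<and> bs_halted \<sigma>1 \<longrightarrow>
       (let X1 = bs_expanded \<sigma>1;
            F0 = (if start \<in> X1 then ereal (ub1v E c1 c2 goal start) else \<infinity>)
        in run_terminates (bs_step E c1 c2 hb1 X1 F0) bs_halted (bs_init goal X1) \<and>
           (\<forall>\<sigma>2. (bs_step E c1 c2 hb1 X1 F0)\<^sup>*\<^sup>* (bs_init goal X1) \<sigma>2 \<and> bs_halted \<sigma>2 \<longrightarrow>
             (let X2 = bs_expanded \<sigma>2;
                  R = ms_step E c1 c2 W X2 (h1v E c1 goal X1) (h2v E c2 goal)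
                        (ub1v E c1 c2 goal) (ub2v E c1 c2 goal X1)
              in run_terminates R ms_halted (ms_init start X2 F0) \<and>
                 (\<forall>\<sigma>. R\<^sup>*\<^sup>* (ms_init start X2 F0) \<sigma> \<and> ms_halted \<sigma> \<longrightarrow>
                   (\<exists>x. ms_sol \<sigma> = Some x \<and>
                      (\<exists>q. is_path E (last x) goal q \<and>
                           pcost c1 q = h1v E c1 goal X1 (last x) \<and>
                           pcost c2 q = ub2v E c1 c2 goal X1 (last x)) \<and>
                      (\<forall>q. is_path E (last x) goal q \<and>
                           pcost c1 q = h1v E c1 goal X1 (last x) \<and>
                           pcost c2 q = ub2v E c1 c2 goal X1 (last x) \<longrightarrow>
                         cost_optimal E c1 c2 W start goal (x @ tl q))))))))"
proof -
  have finS: "finite S" and ES: "E \<subseteq> S \<times> S" using assms(1,2) .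
  have nn1: "nonneg E c1" and nn2: "nonneg E c2" using assms(5) unfolding nonneg_def by auto
  have adm2: "admissible E c2 start hb2" and adm1: "admissible E c1 start hb1" using assms(6,7) .
  obtain \<pi>1 where \<pi>1: "is_path E start goal \<pi>1" "pcost c2 \<pi>1 \<le> W" using assms(8) by blast
  obtain \<pi>0 where \<pi>0: "is_path E start goal \<pi>0 \<and> pcost c2 \<pi>0 \<le> W"
    "\<forall>\<pi>. is_path E start goal \<pi> \<and> pcost c2 \<pi> \<le> W \<longrightarrow>
        (pcost c1 \<pi>0, pcost c2 \<pi>0) \<le> (pcost c1 \<pi>, pcost c2 \<pi>)"
    using path_lexmin[OF finS ES nn1 nn2, of "\<lambda>p. is_path E start goal p \<and> pcost c2 p \<le> W" start goal \<pi>1]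
      \<pi>1 by fastforce
  define o1 where "o1 = pcost c1 \<pi>0"
  define o2 where "o2 = pcost c2 \<pi>0"
  have \<pi>0p: "is_path E start goal \<pi>0" and oW: "o2 \<le> W" using \<pi>0(1) unfolding o2_def by auto
  have opt_min: "\<And>\<pi>. is_path E start goal \<pi> \<Longrightarrow> pcost c2 \<pi> \<le> W \<Longrightarrow> (o1, o2) \<le> (pcost c1 \<pi>, pcost c2 \<pi>)"
    using \<pi>0(2) unfolding o1_def o2_def by blast
  have hd\<pi>0: "start \<in> set \<pi>0" "goal \<in> set \<pi>0" using \<pi>0p unfolding is_path_def
    by (auto intro: hd_in_set last_in_set)
  interpret B1: bsloc S E c2 c1 hb2 UNIV "ereal W" goal
    using finS ES nn1 nn2 by unfold_locales
  have T1: "run_terminates (bs_step E c2 c1 hb2 UNIV (ereal W)) bs_halted (bs_init goal UNIV)"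
    by (rule B1.bs_terminates)
  have REST: "\<forall>\<sigma>1. (bs_step E c2 c1 hb2 UNIV (ereal W))\<^sup>*\<^sup>* (bs_init goal UNIV) \<sigma>1 \<and> bs_halted \<sigma>1 \<longrightarrow>
       (let X1 = bs_expanded \<sigma>1;
            F0 = (if start \<in> X1 then ereal (ub1v E c1 c2 goal start) else \<infinity>)
        in run_terminates (bs_step E c1 c2 hb1 X1 F0) bs_halted (bs_init goal X1) \<and>
           (\<forall>\<sigma>2. (bs_step E c1 c2 hb1 X1 F0)\<^sup>*\<^sup>* (bs_init goal X1) \<sigma>2 \<and> bs_halted \<sigma>2 \<longrightarrow>
             (let X2 = bs_expanded \<sigma>2;
                  R = ms_step E c1 c2 W X2 (h1v E c1 goal X1) (h2v E c2 goal)
                        (ub1v E c1 c2 goal) (ub2v E c1 c2 goal X1)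
              in run_terminates R ms_halted (ms_init start X2 F0) \<and>
                 (\<forall>\<sigma>. R\<^sup>*\<^sup>* (ms_init start X2 F0) \<sigma> \<and> ms_halted \<sigma> \<longrightarrow>
                   (\<exists>x. ms_sol \<sigma> = Some x \<and>
                      (\<exists>q. is_path E (last x) goal q \<and>
                           pcost c1 q = h1v E c1 goal X1 (last x) \<and>
                           pcost c2 q = ub2v E c1 c2 goal X1 (last x)) \<and>
                      (\<forall>q. is_path E (last x) goal q \<and>
                           pcost c1 q = h1v E c1 goal X1 (last x) \<and>
                           pcost c2 q = ub2v E c1 c2 goal X1 (last x) \<longrightarrow>
                         cost_optimal E c1 c2 W start goal (x @ tl q)))))))"
  proof (intro allI impI)
    fix \<sigma>1 assume S1: "(bs_step E c2 c1 hb2 UNIV (ereal W))\<^sup>*\<^sup>* (bs_init goal UNIV) \<sigma>1 \<and> bs_halted \<sigma>1"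
    define X1 where "X1 = bs_expanded \<sigma>1"
    have X1a: "set \<rho> \<subseteq> X1" if "is_path E start u x" "is_path E u goal \<rho>" "pcost c2 x + pcost c2 \<rho> \<le> W"
      for u x \<rho>
      using B1.cover_prefix[of \<sigma>1 start u x \<rho>] S1 adm2 that unfolding X1_def by auto
    have \<pi>0X1: "set \<pi>0 \<subseteq> X1"
      using X1a[of start "[start]" \<pi>0] \<pi>0p oW unfolding o2_def by (simp add: is_path_def)
    have sX1: "start \<in> X1" "goal \<in> X1" using \<pi>0X1 hd\<pi>0 by auto
    define F0 where "F0 = ereal (ub1v E c1 c2 goal start)"
    have Feq: "(if start \<in> X1 then ereal (ub1v E c1 c2 goal start) else \<infinity>) = F0"
      using sX1 unfolding F0_def by simp
    have F0o: "ereal o1 \<le> F0"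
    proof -
      obtain q0 where q0: "is_path E start goal q0" "h2v E c2 goal start = pcost c2 q0"
        "ub1v E c1 c2 goal start = pcost c1 q0"
        using lexmin21[OF finS ES nn1 nn2 \<pi>0p] by blast
      have "pcost c2 q0 \<le> W" using h2v_le[OF nn2 \<pi>0p] q0(2) oW unfolding o2_def by simp
      then have "(o1, o2) \<le> (pcost c1 q0, pcost c2 q0)" using opt_min[OF q0(1)] by simp
      then show ?thesis unfolding F0_def q0(3) by auto
    qed
    interpret B2: bsloc S E c1 c2 hb1 X1 F0 goal
      using finS ES nn1 nn2 by unfold_locales
    have Feq': "(if start \<in> bs_expanded \<sigma>1 then ereal (ub1v E c1 c2 goal start) else \<infinity>) = F0"
      using Feq unfolding X1_def .
    have inner: "\<forall>\<sigma>2. (bs_step E c1 c2 hb1 X1 F0)\<^sup>*\<^sup>* (bs_init goal X1) \<sigma>2 \<and> bs_halted \<sigma>2 \<longrightarrow>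
             (let X2 = bs_expanded \<sigma>2;
                  R = ms_step E c1 c2 W X2 (h1v E c1 goal X1) (h2v E c2 goal)
                        (ub1v E c1 c2 goal) (ub2v E c1 c2 goal X1)
              in run_terminates R ms_halted (ms_init start X2 F0) \<and>
                 (\<forall>\<sigma>. R\<^sup>*\<^sup>* (ms_init start X2 F0) \<sigma> \<and> ms_halted \<sigma> \<longrightarrow>
                   (\<exists>x. ms_sol \<sigma> = Some x \<and>
                      (\<exists>q. is_path E (last x) goal q \<and>
                           pcost c1 q = h1v E c1 goal X1 (last x) \<and>
                           pcost c2 q = ub2v E c1 c2 goal X1 (last x)) \<and>
                      (\<forall>q. is_path E (last x) goal q \<and>
                           pcost c1 q = h1v E c1 goal X1 (last x) \<and>
                           pcost c2 q = ub2v E c1 c2 goal X1 (last x) \<longrightarrow>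
                         cost_optimal E c1 c2 W start goal (x @ tl q)))))"
    proof (intro allI impI)
      fix \<sigma>2 assume S2: "(bs_step E c1 c2 hb1 X1 F0)\<^sup>*\<^sup>* (bs_init goal X1) \<sigma>2 \<and> bs_halted \<sigma>2"
      define X2 where "X2 = bs_expanded \<sigma>2"
      have X2p: "\<exists>\<rho>. is_path E v goal \<rho> \<and> set \<rho> \<subseteq> X1" if "v \<in> X2" for v
        using B2.expanded_path[of \<sigma>2 v] S2 that unfolding X2_def by blast
      have X2X1: "v \<in> X1" if vX2: "v \<in> X2" for v
      proof -
        obtain \<rho> where "is_path E v goal \<rho>" "set \<rho> \<subseteq> X1" using X2p[OF vX2] by blast
        then show ?thesis unfolding is_path_def by (auto intro: hd_in_set)
      qed
      have \<pi>0X2: "set \<pi>0 \<subseteq> X2"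
        using B2.cover_prefix[of \<sigma>2 start start "[start]" \<pi>0] S2 adm1 \<pi>0p \<pi>0X1 F0o
        unfolding X2_def o1_def by (simp add: is_path_def)
      let ?h1 = "h1v E c1 goal X1" and ?h2 = "h2v E c2 goal" and ?ub1 = "ub1v E c1 c2 goal"
        and ?ub2 = "ub2v E c1 c2 goal X1"
      have cons1: "\<And>v w. v \<in> X2 \<Longrightarrow> w \<in> X2 \<Longrightarrow> (v, w) \<in> E \<Longrightarrow> ?h1 v \<le> c1 v w + ?h1 w"
      proof -
        fix v w assume v: "v \<in> X2" and w: "w \<in> X2" and e: "(v, w) \<in> E"
        obtain \<rho> where \<rho>: "is_path E w goal \<rho>" "set \<rho> \<subseteq> X1" using X2p[OF w] by blast
        obtain q1 where q1: "is_path E w goal q1" "set q1 \<subseteq> X1" "?h1 w = pcost c1 q1"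
          using lexmin12[OF finS ES nn1 nn2 \<rho>] by blast
        obtain t where t: "q1 = w # t" using q1(1) unfolding is_path_def by (cases q1) auto
        have "is_path E v goal (v # q1)" using q1(1) e t by (simp add: is_path_Cons)
        moreover have "set (v # q1) \<subseteq> X1" using q1(2) X2X1[OF v] by simp
        ultimately have "?h1 v \<le> pcost c1 (v # q1)" by (rule h1v_le[OF nn1])
        then show "?h1 v \<le> c1 v w + ?h1 w" using q1(3) t by simp
      qed
      have cons2: "\<And>v w. v \<in> X2 \<Longrightarrow> w \<in> X2 \<Longrightarrow> (v, w) \<in> E \<Longrightarrow> ?h2 v \<le> c2 v w + ?h2 w"
      proof -
        fix v w assume v: "v \<in> X2" and w: "w \<in> X2" and e: "(v, w) \<in> E"
        obtain \<rho> where \<rho>: "is_path E w goal \<rho>" "set \<rho> \<subseteq> X1" using X2p[OF w] by blast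
        obtain q0 where q0: "is_path E w goal q0" "?h2 w = pcost c2 q0"
          using lexmin21[OF finS ES nn1 nn2 \<rho>(1)] by blast
        obtain t where t: "q0 = w # t" using q0(1) unfolding is_path_def by (cases q0) auto
        have "is_path E v goal (v # q0)" using q0(1) e t by (simp add: is_path_Cons)
        then have "?h2 v \<le> pcost c2 (v # q0)" by (rule h2v_le[OF nn2])
        then show "?h2 v \<le> c2 v w + ?h2 w" using q0(2) t by simp
      qed
      have low1: "\<And>v r. is_path E v goal r \<Longrightarrow> set r \<subseteq> X2 \<Longrightarrow> ?h1 v \<le> pcost c1 r"
        using h1v_le[OF nn1] X2X1 by blast
      have low2: "\<And>v r. is_path E v goal r \<Longrightarrow> set r \<subseteq> X2 \<Longrightarrow> ?h2 v \<le> pcost c2 r"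
        using h2v_le[OF nn2] by blast
      have real13: "\<And>v. v \<in> X2 \<Longrightarrow> \<exists>q. is_path E v goal q \<and> pcost c1 q = ?h1 v \<and> pcost c2 q = ?ub2 v"
      proof -
        fix v assume v: "v \<in> X2"
        obtain \<rho> where \<rho>: "is_path E v goal \<rho>" "set \<rho> \<subseteq> X1" using X2p[OF v] by blast
        show "\<exists>q. is_path E v goal q \<and> pcost c1 q = ?h1 v \<and> pcost c2 q = ?ub2 v"
          using lexmin12[OF finS ES nn1 nn2 \<rho>] by metis
      qed
      have real12: "\<And>v x. v \<in> X2 \<Longrightarrow> is_path E start v x \<Longrightarrow> pcost c2 x + ?h2 v \<le> W \<Longrightarrow>
                   \<exists>q. is_path E v goal q \<and> pcost c1 q = ?ub1 v \<and> pcost c2 q = ?h2 v"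
      proof -
        fix v x assume v: "v \<in> X2"
        obtain \<rho> where \<rho>: "is_path E v goal \<rho>" "set \<rho> \<subseteq> X1" using X2p[OF v] by blast
        show "\<exists>q. is_path E v goal q \<and> pcost c1 q = ?ub1 v \<and> pcost c2 q = ?h2 v"
          using lexmin21[OF finS ES nn1 nn2 \<rho>(1)] by metis
      qed
      have ubh: "\<And>v x. v \<in> X2 \<Longrightarrow> is_path E start v x \<Longrightarrow> pcost c2 x + ?h2 v \<le> W \<Longrightarrow> ?h1 v = ?ub1 v \<Longrightarrow>
                   ?ub2 v \<le> ?h2 v"
      proof -
        fix v x assume v: "v \<in> X2" and x: "is_path E start v x" and xW: "pcost c2 x + ?h2 v \<le> W"
          and eq: "?h1 v = ?ub1 v"
        obtain \<rho> where \<rho>: "is_path E v goal \<rho>" "set \<rho> \<subseteq> X1" using X2p[OF v] by blast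
        obtain q0 where q0: "is_path E v goal q0" "?h2 v = pcost c2 q0" "?ub1 v = pcost c1 q0"
          using lexmin21[OF finS ES nn1 nn2 \<rho>(1)] by blast
        have "set q0 \<subseteq> X1" using X1a[OF x q0(1)] xW q0(2) by simp
        then have "?ub2 v \<le> pcost c2 q0" using ub2v_le[OF nn2 q0(1)] q0(3) eq by simp
        then show "?ub2 v \<le> ?h2 v" using q0(2) by simp
      qed
      have goalh: "?h1 goal = ?ub1 goal"
      proof -
        have pg: "is_path E goal goal [goal]" by (simp add: is_path_def)
        obtain q1 where q1: "is_path E goal goal q1" "set q1 \<subseteq> X1" "?h1 goal = pcost c1 q1"
          using lexmin12[OF finS ES nn1 nn2 pg, of X1] sX1 by auto
        have a: "?h1 goal = 0"
          using h1v_le[OF nn1 pg, of X1] sX1 q1(3) pcost_nonneg[OF nn1, of q1] q1(1)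
          unfolding is_path_def by simp
        obtain q0 where q0: "is_path E goal goal q0" "?h2 goal = pcost c2 q0" "?ub1 goal = pcost c1 q0"
          using lexmin21[OF finS ES nn1 nn2 pg] by blast
        have h2g: "?h2 goal = 0"
          using h2v_le[OF nn2 pg] q0(2) pcost_nonneg[OF nn2, of q0] q0(1) unfolding is_path_def by simp
        have "?ub1 goal \<le> pcost c1 [goal]" unfolding ub1v_def
        proof (rule cInf_lower)
          show "pcost c1 [goal] \<in> {pcost c1 p |p. is_path E goal goal p \<and> pcost c2 p = ?h2 goal}"
          proof (rule CollectI, intro exI conjI)
            show "pcost c1 [goal] = pcost c1 [goal]" "is_path E goal goal [goal]" using pg by auto
            show "pcost c2 [goal] = ?h2 goal" using h2g by simp
          qed
        qed (use bdd_below_pcost[OF nn1, of goal goal "\<lambda>p. pcost c2 p = ?h2 goal"] in simp)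
        then have "?ub1 goal = 0"
          using q0(3) pcost_nonneg[OF nn1, of q0] q0(1) unfolding is_path_def by simp
        then show ?thesis using a by simp
      qed
      have opt_ex: "is_path E start goal \<pi>0" "pcost c1 \<pi>0 = o1" "pcost c2 \<pi>0 = o2" "set \<pi>0 \<subseteq> X2"
        using \<pi>0p \<pi>0X2 unfolding o1_def o2_def by auto
      interpret M: mscorr S E c1 c2 W X2 ?h1 ?h2 ?ub1 ?ub2 start F0 goal o1 o2 \<pi>0
        by (intro mscorr.intro msterm.intro mscorr_axioms.intro finS ES nn2 nn1 cons1 cons2 low1 low2
            real13 real12 ubh goalh opt_ex oW opt_min F0o) auto
      show "let X2 = bs_expanded \<sigma>2;
                  R = ms_step E c1 c2 W X2 (h1v E c1 goal X1) (h2v E c2 goal)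
                        (ub1v E c1 c2 goal) (ub2v E c1 c2 goal X1)
              in run_terminates R ms_halted (ms_init start X2 F0) \<and>
                 (\<forall>\<sigma>. R\<^sup>*\<^sup>* (ms_init start X2 F0) \<sigma> \<and> ms_halted \<sigma> \<longrightarrow>
                   (\<exists>x. ms_sol \<sigma> = Some x \<and>
                      (\<exists>q. is_path E (last x) goal q \<and>
                           pcost c1 q = h1v E c1 goal X1 (last x) \<and>
                           pcost c2 q = ub2v E c1 c2 goal X1 (last x)) \<and>
                      (\<forall>q. is_path E (last x) goal q \<and>
                           pcost c1 q = h1v E c1 goal X1 (last x) \<and>
                           pcost c2 q = ub2v E c1 c2 goal X1 (last x) \<longrightarrow>
                         cost_optimal E c1 c2 W start goal (x @ tl q))))"
        unfolding Let_def X2_def[symmetric]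
      proof (intro conjI allI impI)
        show "run_terminates (ms_step E c1 c2 W X2 ?h1 ?h2 ?ub1 ?ub2) ms_halted (ms_init start X2 F0)"
          by (rule M.ms_terminates)
      next
        fix \<sigma> assume S3: "(ms_step E c1 c2 W X2 ?h1 ?h2 ?ub1 ?ub2)\<^sup>*\<^sup>* (ms_init start X2 F0) \<sigma> \<and> ms_halted \<sigma>"
        obtain x where x: "ms_sol \<sigma> = Some x" "M.valid x" "pcost c1 x + ?h1 (last x) = o1"
          "pcost c2 x + ?ub2 (last x) = o2"
          using M.ms_correct S3 by blast
        have lx: "last x \<in> X2" using M.valid_lastX[OF x(2)] .
        have xp: "is_path E start (last x) x" using x(2) unfolding M.valid_def by blast
        have xne: "x \<noteq> []" using M.valid_ne[OF x(2)] .
        have EX: "\<exists>q. is_path E (last x) goal q \<and> pcost c1 q = ?h1 (last x) \<and> pcost c2 q = ?ub2 (last x)"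
          using real13[OF lx] .
        have ALL: "cost_optimal E c1 c2 W start goal (x @ tl q)"
          if q: "is_path E (last x) goal q \<and> pcost c1 q = ?h1 (last x) \<and> pcost c2 q = ?ub2 (last x)" for q
        proof -
          have P: "is_path E start goal (x @ tl q)" using is_path_glue[OF xp] q by blast
          have qne: "q \<noteq> []" "hd q = last x" using q unfolding is_path_def by auto
          have c: "pcost c1 (x @ tl q) = o1" "pcost c2 (x @ tl q) = o2"
            using pcost_glue[OF xne qne] q x(3,4) by auto
          show ?thesis unfolding cost_optimal_def using P c oW opt_min by auto
        qed
        show "\<exists>x. ms_sol \<sigma> = Some x \<and>
              (\<exists>q. is_path E (last x) goal q \<and> pcost c1 q = ?h1 (last x) \<and> pcost c2 q = ?ub2 (last x)) \<and>
              (\<forall>q. is_path E (last x) goal q \<and> pcost c1 q = ?h1 (last x) \<and> pcost c2 q = ?ub2 (last x) \<longrightarrow>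
                 cost_optimal E c1 c2 W start goal (x @ tl q))"
          using x(1) EX ALL by blast
      qed
    qed
    show "let X1 = bs_expanded \<sigma>1;
            F0 = (if start \<in> X1 then ereal (ub1v E c1 c2 goal start) else \<infinity>)
        in run_terminates (bs_step E c1 c2 hb1 X1 F0) bs_halted (bs_init goal X1) \<and>
           (\<forall>\<sigma>2. (bs_step E c1 c2 hb1 X1 F0)\<^sup>*\<^sup>* (bs_init goal X1) \<sigma>2 \<and> bs_halted \<sigma>2 \<longrightarrow>
             (let X2 = bs_expanded \<sigma>2;
                  R = ms_step E c1 c2 W X2 (h1v E c1 goal X1) (h2v E c2 goal)
                        (ub1v E c1 c2 goal) (ub2v E c1 c2 goal X1)
              in run_terminates R ms_halted (ms_init start X2 F0) \<and>
                 (\<forall>\<sigma>. R\<^sup>*\<^sup>* (ms_init start X2 F0) \<sigma> \<and> ms_halted \<sigma> \<longrightarrow>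
                   (\<exists>x. ms_sol \<sigma> = Some x \<and>
                      (\<exists>q. is_path E (last x) goal q \<and>
                           pcost c1 q = h1v E c1 goal X1 (last x) \<and>
                           pcost c2 q = ub2v E c1 c2 goal X1 (last x)) \<and>
                      (\<forall>q. is_path E (last x) goal q \<and>
                           pcost c1 q = h1v E c1 goal X1 (last x) \<and>
                           pcost c2 q = ub2v E c1 c2 goal X1 (last x) \<longrightarrow>
                         cost_optimal E c1 c2 W start goal (x @ tl q))))))"
      using B2.bs_terminates inner unfolding Let_def Feq' unfolding X1_def by blast
  qed
  show ?thesis using T1 REST by blast
qed


end
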